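(* Let $n\ge21$ and let $\mathcal{A}$, $\mathbb{P}_5$, $c_5$ be as in the context. If $c_5(3)-\frac{3}{4}c_5(1)\le 9.019$, then there exist constants $\delta_6,\dots,\delta_{21}\in(0,1/2]$ such that, with $\mathbb{P}_6,\dots,\mathbb{P}_{21}$ defined from $\mathbb{P}_5$ and these constants, $f_{21}(\mathcal{A}) := c_{21}(3)/\mu_{21} < 138.874$ (and $\mu_{21}>0$).
   Context: Let $p_k$ be the $k$th prime ($p_1=2,p_2=3,\dots$). Set $S_k=[p_k-1]=\{1,\dots,p_k-1\}$ for $2\le k\le21$ and $S_k=[p_k]$ for $22\le k\le n$, $Q=S_2\times\cdots\times S_n$, and $Q_k=S_2\times\cdots\times S_k$. A hyperplane is $A=A_2\times\cdots\times A_n\subseteq Q$ with each $A_k$ either $S_k$ or a singleton in $S_k$; $F(A)=\{k:A_k\text{ is a singleton}\}$; hyperplanes are parallel if they have the same $F$. $\mathcal{A}$ is a collection of hyperplanes in $Q$ with non-empty fixed-coordinate sets, no two parallel, no one contained in another, and such that if $F(A)=\{i\}$ for some $A\in\mathcal{A}$ then $i\ge22$. Write $\mathcal{A}=\{A_F:F\in\mathcal{F}\}$. A set $X\subseteq Q_k$ is identified with $X\times S_{k+1}\times\cdots\times S_n$; hyperplanes with $F\subseteq\{2,\dots,k\}$ are viewed as subsets of $Q_k$. Let $\mathcal{N}_k=\{F\in\mathcal{F}: k\in F\subseteq\{2,\dots,k\}\}$ and $B_k=\bigcup_{F\in\mathcal{N}_k}A_F\subseteq Q_k$. $\mathbb{P}_5$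 is a probability measure on $Q_5$ supported on $R_5$, the set of points of $Q_5$ not lying in any $A_F$ with $F\subseteq\{2,3,4,5\}$. For $6\le k\le 21$, given $\mathbb{P}_{k-1}$ on $Q_{k-1}$, let $\alpha_k(x)=|\{y\in S_k:(x,y)\in B_k\}|/|S_k|$ and set $\mathbb{P}_k(x,y)=\max\{0,\frac{\alpha_k(x)-\delta_k}{\alpha_k(x)(1-\delta_k)}\}\frac{\mathbb{P}_{k-1}(x)}{|S_k|}$ if $(x,y)\in B_k$, and $\mathbb{P}_k(x,y)=\min\{\frac{1}{1-\alpha_k(x)},\frac{1}{1-\delta_k}\}\frac{\mathbb{P}_{k-1}(x)}{|S_k|}$ otherwise. Let $\mu_k=1-\sum_{i=6}^k\mathbb{P}_i(B_i)$. For $I\subseteq\{2,3,4,5\}$, $c(I)=\max\{\mathbb{P}_5(H):H\text{ a hyperplane in }Q_5\text{ with }F(H)=I\}$ ($c(\emptyset)=1$), and for $k\ge5$, $c_k(x)=\sum_{I\subseteq\{2,3,4,5\}}c(I)x^{|I|}\prod_{j=6}^k\big(1+\frac{x}{(1-\delta_j)|S_j|}\big)$; in particular $c_5(x)=\sum_{I\subseteq\{2,3,4,5\}}c(I)x^{|I|}$. *)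

theory Defs
  imports Complex_Main "HOL-Library.Infinite_Set" "HOL-Library.FuncSet" "HOL-Computational_Algebra.Primes"
begin

text \<open>The k-th prime, with p 1 = 2, p 2 = 3, ...\<close>
definition pk :: "nat \<Rightarrow> nat" where
  "pk k = enumerate {p::nat. prime p} (k - 1)"

definition S :: "nat \<Rightarrow> nat set" where
  "S k = (if k \<le> 21 then {1..<pk k} else {1..pk k})"

text \<open>Q_m = S_2 x ... x S_m, points are extensional functions on {2..m}.\<close>
definition Qset :: "nat \<Rightarrow> (nat \<Rightarrow> nat) set" where
  "Qset m = PiE {2..m} S"

definition hyp :: "nat \<Rightarrow> nat set \<Rightarrow> (nat \<Rightarrow> nat) \<Rightarrow> (nat \<Rightarrow> nat) set" where
  "hyp m F v = {x \<in> Qset m. \<forall>j\<in>F. x j = v j}"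

text \<open>The collection \<A> = {A_F : F \<in> \<F>}, with A_F = hyp n F (a F), as in the context.\<close>
definition valid_collection :: "nat \<Rightarrow> nat set set \<Rightarrow> (nat set \<Rightarrow> nat \<Rightarrow> nat) \<Rightarrow> bool" where
  "valid_collection n \<F> a \<longleftrightarrow>
     (\<forall>F\<in>\<F>. F \<noteq> {} \<and> F \<subseteq> {2..n} \<and> (\<forall>k\<in>F. a F k \<in> S k)) \<and>
     (\<forall>F\<in>\<F>. \<forall>G\<in>\<F>. F \<noteq> G \<longrightarrow> \<not> hyp n F (a F) \<subseteq> hyp n G (a G)) \<and>
     (\<forall>F\<in>\<F>. \<forall>i. F = {i} \<longrightarrow> i \<ge> 22)"

definition R5 :: "nat set set \<Rightarrow> (nat set \<Rightarrow> nat \<Rightarrow> nat) \<Rightarrow> (nat \<Rightarrow> nat) set" where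
  "R5 \<F> a = {x \<in> Qset 5. \<forall>F\<in>\<F>. F \<subseteq> {2..5} \<longrightarrow> x \<notin> hyp 5 F (a F)}"

definition prob_on_R5 :: "nat set set \<Rightarrow> (nat set \<Rightarrow> nat \<Rightarrow> nat) \<Rightarrow> ((nat \<Rightarrow> nat) \<Rightarrow> real) \<Rightarrow> bool" where
  "prob_on_R5 \<F> a P5 \<longleftrightarrow>
     (\<forall>x\<in>Qset 5. P5 x \<ge> 0) \<and> (\<Sum>x\<in>Qset 5. P5 x) = 1 \<and>
     (\<forall>x\<in>Qset 5. x \<notin> R5 \<F> a \<longrightarrow> P5 x = 0)"

definition Bk :: "nat set set \<Rightarrow> (nat set \<Rightarrow> nat \<Rightarrow> nat) \<Rightarrow> nat \<Rightarrow> (nat \<Rightarrow> nat) set" where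
  "Bk \<F> a k = (\<Union>F\<in>{F\<in>\<F>. k \<in> F \<and> F \<subseteq> {2..k}}. hyp k F (a F))"

text \<open>alpha_k(x) for x \<in> Q_{k-1}; (x,y) is x(k := y).\<close>
definition alpha :: "nat set set \<Rightarrow> (nat set \<Rightarrow> nat \<Rightarrow> nat) \<Rightarrow> nat \<Rightarrow> (nat \<Rightarrow> nat) \<Rightarrow> real" where
  "alpha \<F> a k x = real (card {y \<in> S k. x(k := y) \<in> Bk \<F> a k}) / real (card (S k))"

fun Pk :: "nat set set \<Rightarrow> (nat set \<Rightarrow> nat \<Rightarrow> nat) \<Rightarrow> ((nat \<Rightarrow> nat) \<Rightarrow> real) \<Rightarrow> (nat \<Rightarrow> real)
           \<Rightarrow> nat \<Rightarrow> (nat \<Rightarrow> nat) \<Rightarrow> real" where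
  "Pk \<F> a P5 \<delta> k z =
     (if k \<le> 5 then P5 z else
       (let x = z(k := undefined); al = alpha \<F> a k x; d = \<delta> k;
            prev = Pk \<F> a P5 \<delta> (k - 1) x
        in if z \<in> Bk \<F> a k
           then max 0 ((al - d) / (al * (1 - d))) * prev / real (card (S k))
           else min (1 / (1 - al)) (1 / (1 - d)) * prev / real (card (S k))))"

declare Pk.simps [simp del]

definition mu :: "nat set set \<Rightarrow> (nat set \<Rightarrow> nat \<Rightarrow> nat) \<Rightarrow> ((nat \<Rightarrow> nat) \<Rightarrow> real) \<Rightarrow> (nat \<Rightarrow> real)
           \<Rightarrow> nat \<Rightarrow> real" where
  "mu \<F> a P5 \<delta> k = 1 - (\<Sum>i=6..k. \<Sum>z\<in>Bk \<F> a i. Pk \<F> a P5 \<delta> i z)"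

definition cI :: "((nat \<Rightarrow> nat) \<Rightarrow> real) \<Rightarrow> nat set \<Rightarrow> real" where
  "cI P5 I = Max ((\<lambda>v. \<Sum>x\<in>hyp 5 I v. P5 x) ` PiE I S)"

definition c5 :: "((nat \<Rightarrow> nat) \<Rightarrow> real) \<Rightarrow> real \<Rightarrow> real" where
  "c5 P5 t = (\<Sum>I\<in>Pow {2..5}. cI P5 I * t ^ card I)"

definition ck :: "((nat \<Rightarrow> nat) \<Rightarrow> real) \<Rightarrow> (nat \<Rightarrow> real) \<Rightarrow> nat \<Rightarrow> real \<Rightarrow> real" where
  "ck P5 \<delta> k t = c5 P5 t * (\<Prod>j=6..k. 1 + t / ((1 - \<delta> j) * real (card (S j))))"

end

theory Submission
  imports Defs
begin


lemma enum_primes_step: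
  assumes "enumerate {p::nat. prime p} n = p" "prime q" "p < q"
    "\<forall>r\<in>{Suc p..<q}. \<not> prime r"
  shows "enumerate {p::nat. prime p} (Suc n) = q"
  unfolding enumerate_Suc''[OF primes_infinite] assms(1)
  apply (rule Least_equality)
  using assms by auto

lemma quad_nat:
  fixes A s C :: real and m :: nat
  assumes A: "A > 0"
    and q0: "0 \<le> A * real m ^ 2 - s * real m + C"
    and q1: "0 \<le> A * (real m + 1) ^ 2 - s * (real m + 1) + C"
    and v0: "2 * A * real m \<le> s" and v1: "s \<le> 2 * A * (real m + 1)"
  shows "0 \<le> A * real j ^ 2 - s * real j + C"
proof (cases "j \<le> m")
  case True
  have e: "A * real j ^ 2 - s * real j + C = (A * real m ^ 2 - s * real m + C) + (real j - real m) * (A * (real j + real m) - s)"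
    by (simp add: algebra_simps power2_eq_square)
  have "real j - real m \<le> 0" using True by simp
  moreover have "A * (real j + real m) - s \<le> 0"
  proof -
    have "A * (real j + real m) \<le> A * (2 * real m)" using True A by (intro mult_left_mono) auto
    then show ?thesis using v0 by simp
  qed
  ultimately have "0 \<le> (real j - real m) * (A * (real j + real m) - s)" by (rule mult_nonpos_nonpos)
  then show ?thesis using e q0 by linarith
next
  case False
  have e: "A * real j ^ 2 - s * real j + C = (A * (real m + 1) ^ 2 - s * (real m + 1) + C) + (real j - real m - 1) * (A * (real j + real m + 1) - s)"
    by (simp add: algebra_simps power2_eq_square)
  have "real j - real m - 1 \<ge> 0" using False by simp
  moreover have "A * (real j + real m + 1) - s \<ge> 0"
  proof -
    have "A * (2 * (real m + 1)) \<le> A * (real j + real m + 1)" using False A by (intro mult_left_mono) auto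
    moreover have "2 * A * (real m + 1) = A * (2 * (real m + 1))" by simp
    ultimately show ?thesis using v1 by linarith
  qed
  ultimately have "0 \<le> (real j - real m - 1) * (A * (real j + real m + 1) - s)" by simp
  then show ?thesis using e q1 by linarith
qed

lemma Mprop:
  fixes s m :: nat and d M :: real
  assumes s: "s > 0" and d: "0 < d" "d < 1" and M: "0 < M"
    and q0: "0 \<le> (M * (1 - d)) * real m ^ 2 - real s * real m + d * real s ^ 2"
    and q1: "0 \<le> (M * (1 - d)) * (real m + 1) ^ 2 - real s * (real m + 1) + d * real s ^ 2"
    and v0: "2 * (M * (1 - d)) * real m \<le> real s" and v1: "real s \<le> 2 * (M * (1 - d)) * (real m + 1)"
  shows "max 0 ((real j / real s - d) / (1 - d)) \<le> M * (real j / real s)^2"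
proof -
  have A: "M * (1 - d) > 0" using M d by simp
  have Q: "0 \<le> (M * (1 - d)) * real j ^ 2 - real s * real j + d * real s ^ 2"
    by (rule quad_nat[OF A q0 q1 v0 v1])
  have rs: "real s > 0" using s by simp
  have "(real j / real s - d) / (1 - d) \<le> M * (real j / real s)^2"
  proof -
    have "(real j / real s - d) / (1 - d) = (real j * real s - d * real s ^ 2) / (real s ^ 2 * (1 - d))"
      using rs d by (simp add: field_simps power2_eq_square)
    also have "\<dots> \<le> ((M * (1 - d)) * real j ^ 2) / (real s ^ 2 * (1 - d))"
      using Q rs d by (intro divide_right_mono) (auto simp: algebra_simps)
    also have "\<dots> = M * (real j / real s)^2"
      using rs d by (simp add: field_simps power2_eq_square)
    finally show ?thesis .
  qed
  moreover have "0 \<le> M * (real j / real s)^2" using M by simp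
  ultimately show ?thesis by simp
qed



lemma pk_prime: "prime (pk k)"
  unfolding pk_def using enumerate_in_set[OF primes_infinite] by auto

lemma pk_ge2: "pk k \<ge> 2"
  using pk_prime prime_ge_2_nat by blast

lemma S_fin[simp]: "finite (S k)"
  by (simp add: S_def)

lemma one_in_S: "1 \<in> S k"
  using pk_ge2[of k] by (auto simp: S_def)

lemma card_S_pos: "card (S k) > 0"
  using one_in_S[of k] card_gt_0_iff by fastforce

lemma Qset_fin[simp]: "finite (Qset m)"
  by (simp add: Qset_def finite_PiE)

lemma Qset_upd_mem: "k \<ge> 2 \<Longrightarrow> x \<in> Qset (k-1) \<Longrightarrow> y \<in> S k \<Longrightarrow> x(k:=y) \<in> Qset k"
  unfolding Qset_def by (auto simp: PiE_iff extensional_def)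

lemma Qset_undef: "k \<ge> 2 \<Longrightarrow> x \<in> Qset (k-1) \<Longrightarrow> x k = undefined"
  unfolding Qset_def by (auto simp: PiE_iff extensional_def)

lemma Qset_restr_mem: "k \<ge> 2 \<Longrightarrow> z \<in> Qset k \<Longrightarrow> z(k:=undefined) \<in> Qset (k-1)"
proof -
  assume k: "k \<ge> 2" and z: "z \<in> Qset k"
  have "\<And>i. i \<notin> {2..k-1} \<Longrightarrow> i \<noteq> k \<Longrightarrow> i \<notin> {2..k}" by auto
  then show ?thesis using z k unfolding Qset_def by (auto simp: PiE_iff extensional_def)
qed

lemma Qset_top: "k \<ge> 2 \<Longrightarrow> z \<in> Qset k \<Longrightarrow> z k \<in> S k"
  unfolding Qset_def by (auto simp: PiE_iff)

lemma Qset_sum_split: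
  assumes "k \<ge> 2"
  shows "(\<Sum>z\<in>Qset k. f z) = (\<Sum>x\<in>Qset (k-1). \<Sum>y\<in>S k. f (x(k:=y)))"
proof -
  let ?g = "\<lambda>(x,y). x(k:=y)"
  have inj: "inj_on ?g (Qset (k-1) \<times> S k)"
  proof (rule inj_onI)
    fix p q assume A: "p \<in> Qset (k-1) \<times> S k" "q \<in> Qset (k-1) \<times> S k" and E0: "?g p = ?g q"
    obtain x y where p: "p = (x,y)" by fastforce
    obtain x' y' where q: "q = (x',y')" by fastforce
    have E: "x(k := y) = x'(k := y')" using E0 p q by simp
    have "y = y'" using fun_cong[OF E, of k] by simp
    moreover have "x = x'"
    proof
      fix j show "x j = x' j"
        using fun_cong[OF E, of j] Qset_undef[OF assms, of x] Qset_undef[OF assms, of x'] A p q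
        by (cases "j = k") auto
    qed
    ultimately show "p = q" using p q by simp
  qed
  have i1: "?g ` (Qset (k-1) \<times> S k) \<subseteq> Qset k" using Qset_upd_mem[OF assms] by auto
  have i2: "Qset k \<subseteq> ?g ` (Qset (k-1) \<times> S k)"
    proof
      fix z assume z: "z \<in> Qset k"
      have "z = ?g (z(k:=undefined), z k)" by simp
      moreover have "(z(k:=undefined), z k) \<in> Qset (k-1) \<times> S k"
        using Qset_restr_mem[OF assms z] Qset_top[OF assms z] by simp
      ultimately show "z \<in> ?g ` (Qset (k-1) \<times> S k)" by blast
    qed
  have img: "?g ` (Qset (k-1) \<times> S k) = Qset k" using i1 i2 by blast
  have "(\<Sum>z\<in>Qset k. f z) = (\<Sum>p\<in>Qset (k-1) \<times> S k. f (?g p))"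
    using sum.reindex[OF inj, of f] img by simp
  also have "\<dots> = (\<Sum>x\<in>Qset (k-1). \<Sum>y\<in>S k. f (x(k:=y)))"
    by (simp add: sum.cartesian_product case_prod_unfold)
  finally show ?thesis .
qed

lemma upd_restr: "k \<ge> 2 \<Longrightarrow> x \<in> Qset (k-1) \<Longrightarrow> (x(k:=y))(k:=undefined) = x"
  using Qset_undef by (simp add: fun_upd_idem_iff)

lemma Bk_sub: "Bk FF a k \<subseteq> Qset k"
  unfolding Bk_def hyp_def by auto

lemma fiber_algebra:
  fixes j s :: nat and d p :: real
  assumes "j \<le> s" "0 < s" "0 < d" "d < 1" "p \<ge> 0"
  defines "al \<equiv> real j / real s"
  defines "A \<equiv> max 0 ((al - d) / (al * (1 - d)))"
  defines "B \<equiv> min (1 / (1 - al)) (1 / (1 - d))"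
  shows "real j * (A * p / real s) + real (s - j) * (B * p / real s) = p"
    and "real j * (A * p / real s) = p * max 0 ((al - d) / (1 - d))"
    and "0 \<le> A" "A \<le> 1 / (1 - d)" "j < s \<Longrightarrow> 0 \<le> B" "B \<le> 1 / (1 - d)"
proof -
  have s0: "real s > 0" using assms by simp
  have al01: "0 \<le> al" "al \<le> 1" using assms by (auto simp: al_def divide_simps)
  have jal: "real j / real s = al" by (simp add: al_def)
  have sj: "real (s - j) / real s = 1 - al" using assms s0 by (simp add: al_def of_nat_diff divide_simps)
  have L: "real j * (A * p / real s) = al * A * p" unfolding jal[symmetric] by simp
  have R: "real (s - j) * (B * p / real s) = (1 - al) * B * p" unfolding sj[symmetric] by simp
  show "0 \<le> A" by (simp add: A_def)
  show "A \<le> 1 / (1 - d)"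
  proof (cases "al - d \<le> 0")
    case True
    then have "(al - d) / (al * (1 - d)) \<le> 0" using assms al01 by (intro divide_nonpos_nonneg) auto
    then show ?thesis using assms by (simp add: A_def)
  next
    case False
    then have "al > 0" using assms by simp
    then have "(al - d) / (al * (1 - d)) \<le> 1 / (1 - d)" using assms False
      by (simp add: divide_simps)
    then show ?thesis using assms by (simp add: A_def)
  qed
  show "j < s \<Longrightarrow> 0 \<le> B" using assms al01
    by (auto simp: B_def al_def divide_simps)
  show "B \<le> 1 / (1 - d)" by (simp add: B_def)
  have alA: "al * A = max 0 ((al - d) / (1 - d))"
  proof (cases "al = 0")
    case True then show ?thesis using assms by (simp add: A_def divide_simps)
  next
    case False
    then have "al > 0" using al01 by simp
    then show ?thesis unfolding A_def using assms
      by (cases "al \<le> d") (auto simp: divide_simps max_def)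
  qed
  show "real j * (A * p / real s) = p * max 0 ((al - d) / (1 - d))"
    using L alA by simp
  show "real j * (A * p / real s) + real (s - j) * (B * p / real s) = p"
  proof (cases "al = 1")
    case True
    then have "j = s" using assms s0 by (simp add: al_def divide_simps)
    then show ?thesis using L alA True assms by (simp add: divide_simps)
  next
    case False
    then have al1: "al < 1" using al01 by simp
    show ?thesis
    proof (cases "al \<le> d")
      case True
      then have "A = 0" unfolding A_def using assms al01
        by (cases "al = 0") (auto simp: divide_simps max_def)
      moreover have "1 / (1 - al) \<le> 1 / (1 - d)" using True al1 assms
        by (intro divide_left_mono) auto
      moreover have "B = 1 / (1 - al)" unfolding B_def using calculation(2) by simp
      ultimately show ?thesis using L R al1 by simp
    next
      case False
      then have "1 / (1 - d) \<le> 1 / (1 - al)" using al1 assms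
        by (intro divide_left_mono) auto
      then have "B = 1 / (1 - d)" unfolding B_def by simp
      note Bd = this
      have m: "max 0 ((al-d)/(1-d)) = (al-d)/(1-d)" using False assms by auto
      have "real j * (A * p / real s) + real (s - j) * (B * p / real s)
          = al * A * p + (1 - al) * B * p" using L R by simp
      also have "\<dots> = ((al-d)/(1-d) + (1-al)/(1-d)) * p"
        using alA m Bd by (simp add: algebra_simps)
      also have "(al-d)/(1-d) + (1-al)/(1-d) = 1" using assms
        by (simp add: add_divide_distrib[symmetric])
      finally show ?thesis by simp
    qed
  qed
qed

lemma Pow_insert_sum:
  assumes "finite A" "a \<notin> A"
  shows "(\<Sum>U\<in>Pow (insert a A). f U) = (\<Sum>U\<in>Pow A. f U) + (\<Sum>U\<in>Pow A. f (insert a U))"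
proof -
  have d: "Pow A \<inter> insert a ` Pow A = {}" using assms by auto
  have inj: "inj_on (insert a) (Pow A)" using assms unfolding inj_on_def by (auto simp: insert_ident)
  have "(\<Sum>U\<in>Pow (insert a A). f U) = (\<Sum>U\<in>Pow A \<union> insert a ` Pow A. f U)"
    by (simp add: Pow_insert)
  also have "\<dots> = (\<Sum>U\<in>Pow A. f U) + (\<Sum>U\<in>insert a ` Pow A. f U)"
    using assms d by (intro sum.union_disjoint) auto
  also have "(\<Sum>U\<in>insert a ` Pow A. f U) = (\<Sum>U\<in>Pow A. f (insert a U))"
    using sum.reindex[OF inj] by simp
  finally show ?thesis .
qed

lemma pairs_sum:
  fixes f :: "'a set \<Rightarrow> real"
  assumes "finite A"
  shows "(\<Sum>G\<in>Pow A. \<Sum>G'\<in>Pow A. f (G \<union> G')) = (\<Sum>U\<in>Pow A. 3 ^ card U * f U)"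
  using assms
proof (induct A arbitrary: f rule: finite_induct)
  case empty then show ?case by simp
next
  case (insert a A)
  have c: "\<And>U. U \<in> Pow A \<Longrightarrow> card (insert a U) = Suc (card U)"
    using insert finite_subset by (metis PowD card_insert_disjoint subsetD)
  have "(\<Sum>G\<in>Pow (insert a A). \<Sum>G'\<in>Pow (insert a A). f (G \<union> G'))
      = (\<Sum>G\<in>Pow A. \<Sum>G'\<in>Pow A. f (G \<union> G')) + 3 * (\<Sum>G\<in>Pow A. \<Sum>G'\<in>Pow A. f (insert a (G \<union> G')))"
    unfolding Pow_insert_sum[OF insert(1,2)]
    apply (simp add: sum.distrib sum_distrib_left)
    apply (simp only: sum.distrib[symmetric])
    apply simp
    done
  also have "\<dots> = (\<Sum>U\<in>Pow A. 3 ^ card U * f U) + 3 * (\<Sum>U\<in>Pow A. 3 ^ card U * f (insert a U))"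
    using insert(3)[of f] insert(3)[of "\<lambda>U. f (insert a U)"] by simp
  also have "\<dots> = (\<Sum>U\<in>Pow (insert a A). 3 ^ card U * f U)"
    unfolding Pow_insert_sum[OF insert(1,2)] using c by (simp add: sum_distrib_left mult.assoc)
  finally show ?case .
qed

lemma pairs_sum_ne:
  fixes f :: "'a set \<Rightarrow> real"
  assumes "finite A"
  shows "(\<Sum>G\<in>Pow A - {{}}. \<Sum>G'\<in>Pow A - {{}}. f (G \<union> G'))
     = (\<Sum>G\<in>Pow A. \<Sum>G'\<in>Pow A. f (G \<union> G')) - 2 * (\<Sum>G\<in>Pow A. f G) + f {}"
proof -
  have fin: "finite (Pow A)" using assms by simp
  have e: "{} \<in> Pow A" by simp
  have r: "\<And>h :: 'a set \<Rightarrow> real. (\<Sum>G\<in>Pow A - {{}}. h G) = (\<Sum>G\<in>Pow A. h G) - h {}"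
    using fin by (simp add: sum_diff1)
  show ?thesis unfolding r by (simp add: sum_subtractf)
qed

lemma sum_swap3:
  "(\<Sum>x\<in>A. \<Sum>F\<in>B. \<Sum>F'\<in>C. h x F F') = (\<Sum>F\<in>B. \<Sum>F'\<in>C. \<Sum>x\<in>A. (h x F F' :: real))"
proof -
  have "(\<Sum>x\<in>A. \<Sum>F\<in>B. \<Sum>F'\<in>C. h x F F') = (\<Sum>F\<in>B. \<Sum>x\<in>A. \<Sum>F'\<in>C. h x F F')"
    by (rule sum.swap)
  also have "\<dots> = (\<Sum>F\<in>B. \<Sum>F'\<in>C. \<Sum>x\<in>A. h x F F')"
    by (rule sum.cong[OF refl], rule sum.swap)
  finally show ?thesis .
qed

lemma diff_sub: "X \<subseteq> {2..k} \<Longrightarrow> X - {k} \<subseteq> {2..(k::nat)-1}"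
proof
  fix x assume X: "X \<subseteq> {2..k}" and x: "x \<in> X - {k}"
  then have "x \<in> {2..k}" "x \<noteq> k" by auto
  then show "x \<in> {2..k-1}" by auto
qed

lemma aux_bound:
  fixes C d p s :: real
  assumes "0 \<le> C" "C \<le> 1/(1-d)" "0 \<le> p" "0 < s" "d < 1"
  shows "0 \<le> C*p/s \<and> C*p/s \<le> p/((1-d)*s)"
proof
  show "0 \<le> C*p/s" using assms by simp
  have "C*p/s \<le> (1/(1-d))*p/s"
    using assms by (intro divide_right_mono mult_right_mono) auto
  then show "C*p/s \<le> p/((1-d)*s)" by simp
qed

locale covs =
  fixes FF :: "nat set set" and a :: "nat set \<Rightarrow> nat \<Rightarrow> nat"
    and P5 :: "(nat \<Rightarrow> nat) \<Rightarrow> real" and \<delta> :: "nat \<Rightarrow> real"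
  assumes P5_nn: "\<And>x. x \<in> Qset 5 \<Longrightarrow> P5 x \<ge> 0"
    and del: "\<And>j. j \<in> {6..21} \<Longrightarrow> 0 < \<delta> j \<and> \<delta> j \<le> 1/2"
    and P5_sum: "(\<Sum>x\<in>Qset 5. P5 x) = 1"
    and vc: "\<And>F i. F \<in> FF \<Longrightarrow> F = {i} \<Longrightarrow> i \<ge> 22"
begin

abbreviation P where "P \<equiv> Pk FF a P5 \<delta>"

definition J :: "nat \<Rightarrow> (nat \<Rightarrow> nat) \<Rightarrow> nat set" where
  "J k x = {y \<in> S k. x(k:=y) \<in> Bk FF a k}"

lemma alpha_J: "alpha FF a k x = real (card (J k x)) / real (card (S k))"
  by (simp add: alpha_def J_def)

lemma J_sub: "J k x \<subseteq> S k" by (auto simp: J_def)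

lemma P5_eq: "k \<le> 5 \<Longrightarrow> P k z = P5 z"
  by (simp add: Pk.simps)

lemma P_fiber:
  assumes k: "k \<ge> 6" and x: "x \<in> Qset (k-1)" and y: "y \<in> S k"
  shows "P k (x(k:=y)) = (if y \<in> J k x
     then max 0 ((alpha FF a k x - \<delta> k) / (alpha FF a k x * (1 - \<delta> k)))
     else min (1 / (1 - alpha FF a k x)) (1 / (1 - \<delta> k))) * P (k-1) x / real (card (S k))"
proof -
  have r: "x(k:=undefined) = x" using Qset_undef[of k x] k x by (simp add: fun_upd_idem_iff)
  have "x(k:=y) \<in> Bk FF a k \<longleftrightarrow> y \<in> J k x" using y by (simp add: J_def)
  then show ?thesis using k by (subst Pk.simps) (simp add: r Let_def)
qed

lemma fiber_facts:
  assumes k: "k \<in> {6..21}" and x: "x \<in> Qset (k-1)" and p: "P (k-1) x \<ge> 0"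
  shows "(\<Sum>y\<in>S k. P k (x(k:=y))) = P (k-1) x"
    and "(\<Sum>y\<in>J k x. P k (x(k:=y))) = P (k-1) x * max 0 ((alpha FF a k x - \<delta> k) / (1 - \<delta> k))"
    and "\<And>y. y \<in> S k \<Longrightarrow> 0 \<le> P k (x(k:=y)) \<and> P k (x(k:=y)) \<le> P (k-1) x / ((1 - \<delta> k) * real (card (S k)))"
proof -
  define s where "s = card (S k)"
  define j where "j = card (J k x)"
  define d where "d = \<delta> k"
  define al where "al = alpha FF a k x"
  define A where "A = max 0 ((al - d) / (al * (1 - d)))"
  define B where "B = min (1 / (1 - al)) (1 / (1 - d))"
  have k6: "k \<ge> 6" using k by simp
  have js: "j \<le> s" unfolding j_def s_def by (rule card_mono) (auto simp: J_def)
  have s0: "0 < s" using card_S_pos s_def by simp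
  have d: "0 < d" "d < 1" using del[OF k] d_def by auto
  have al: "al = real j / real s" by (simp add: al_def alpha_J j_def s_def)
  note FA = fiber_algebra[OF js s0 d p, folded al, folded A_def B_def]
  have fib: "\<And>y. y \<in> S k \<Longrightarrow> P k (x(k:=y)) = (if y \<in> J k x then A else B) * P (k-1) x / real s"
    using P_fiber[OF k6 x] by (simp add: A_def B_def al_def d_def s_def)
  have fin: "finite (S k)" by simp
  have sumJ: "(\<Sum>y\<in>J k x. P k (x(k:=y))) = real j * (A * P (k-1) x / real s)"
    using fib J_sub[of k x] by (simp add: j_def subset_iff)
  have sumN: "(\<Sum>y\<in>S k - J k x. P k (x(k:=y))) = real (s - j) * (B * P (k-1) x / real s)"
  proof -
    have "(\<Sum>y\<in>S k - J k x. P k (x(k:=y))) = (\<Sum>y\<in>S k - J k x. B * P (k-1) x / real s)"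
      using fib by (intro sum.cong) auto
    also have "\<dots> = real (card (S k - J k x)) * (B * P (k-1) x / real s)" by simp
    also have "card (S k - J k x) = s - j"
      using card_Diff_subset[OF finite_subset[OF J_sub fin] J_sub] by (simp add: s_def j_def)
    finally show ?thesis .
  qed
  have split: "(\<Sum>y\<in>S k. P k (x(k:=y))) = (\<Sum>y\<in>J k x. P k (x(k:=y))) + (\<Sum>y\<in>S k - J k x. P k (x(k:=y)))"
    using sum.subset_diff[OF J_sub[of k x] fin, of "\<lambda>y. P k (x(k:=y))"] by linarith
  show "(\<Sum>y\<in>S k. P k (x(k:=y))) = P (k-1) x"
    using split sumJ sumN FA(1) by simp
  show "(\<Sum>y\<in>J k x. P k (x(k:=y))) = P (k-1) x * max 0 ((alpha FF a k x - \<delta> k) / (1 - \<delta> k))"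
    using sumJ FA(2) by (simp add: al_def d_def)
  fix y assume y: "y \<in> S k"
  show "0 \<le> P k (x(k:=y)) \<and> P k (x(k:=y)) \<le> P (k-1) x / ((1 - \<delta> k) * real (card (S k)))"
  proof (cases "y \<in> J k x")
    case True
    then show ?thesis using fib[OF y] aux_bound[OF FA(3,4) p _ d(2), of "real s"] s0
      by (simp add: s_def d_def)
  next
    case False
    have "j < s"
    proof -
      have "J k x \<subset> S k" using J_sub False y by blast
      then show ?thesis unfolding j_def s_def by (simp add: psubset_card_mono)
    qed
    then show ?thesis using fib[OF y] False aux_bound[OF FA(5) FA(6) p _ d(2), of "real s"] s0
      by (simp add: s_def d_def)
  qed
qed

lemma P_nn: "5 \<le> k \<Longrightarrow> k \<le> 21 \<Longrightarrow> z \<in> Qset k \<Longrightarrow> 0 \<le> P k z"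
proof (induct k arbitrary: z rule: dec_induct)
  case base then show ?case using P5_nn by (simp add: P5_eq)
next
  case (step n)
  have k: "Suc n \<in> {6..21}" using step by simp
  have x: "z(Suc n := undefined) \<in> Qset (Suc n - 1)" using Qset_restr_mem[of "Suc n" z] step by simp
  have y: "z (Suc n) \<in> S (Suc n)" using Qset_top[of "Suc n" z] step by simp
  have p: "0 \<le> P (Suc n - 1) (z(Suc n := undefined))" using step x by simp
  have "0 \<le> P (Suc n) ((z(Suc n := undefined))(Suc n := z (Suc n)))"
    using fiber_facts(3)[OF k x p y] by simp
  then show ?case by simp
qed

definition w :: "nat \<Rightarrow> real" where "w j = 1 / ((1 - \<delta> j) * real (card (S j)))"

definition g :: "nat set \<Rightarrow> real" where
  "g U = cI P5 (U \<inter> {2..5}) * (\<Prod>j\<in>U - {2..5}. w j)"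

lemma hyp_sum: "(\<Sum>z\<in>hyp m V v. f z) = (\<Sum>z\<in>Qset m. if \<forall>j\<in>V. z j = v j then f z else 0)"
  unfolding hyp_def by (simp add: sum.inter_filter)

lemma PiE_S_ne: "PiE V S \<noteq> {}"
  using one_in_S by (simp add: PiE_eq_empty_iff) blast

lemma cI_ge: assumes "V \<subseteq> {2..5}" shows "(\<Sum>x\<in>hyp 5 V v. P5 x) \<le> cI P5 V"
proof -
  have finV: "finite V" using assms finite_subset by blast
  have fin: "finite ((\<lambda>v. \<Sum>x\<in>hyp 5 V v. P5 x) ` PiE V S)"
    using finV by (simp add: finite_PiE)
  show ?thesis
  proof (cases "\<forall>j\<in>V. v j \<in> S j")
    case True
    then have r: "restrict v V \<in> PiE V S" by simp
    have "hyp 5 V (restrict v V) = hyp 5 V v" by (simp add: hyp_def)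
    then show ?thesis unfolding cI_def using Max_ge[OF fin imageI[OF r]] by simp
  next
    case False
    then obtain j where j: "j \<in> V" "v j \<notin> S j" by blast
    have "hyp 5 V v = {}"
    proof (rule ccontr)
      assume "hyp 5 V v \<noteq> {}"
      then obtain x where x: "x \<in> Qset 5" "\<forall>j\<in>V. x j = v j" unfolding hyp_def by blast
      have "x j \<in> S j" using x(1) j(1) assms unfolding Qset_def by (auto simp: PiE_iff)
      then show False using x(2) j by simp
    qed
    note empty = this
    obtain u where u: "u \<in> PiE V S" using PiE_S_ne by blast
    have h1: "0 \<le> (\<Sum>x\<in>hyp 5 V u. P5 x)" using P5_nn by (intro sum_nonneg) (auto simp: hyp_def)
    have h2: "(\<Sum>x\<in>hyp 5 V u. P5 x) \<le> cI P5 V" unfolding cI_def using Max_ge[OF fin imageI[OF u]] by simp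
    show ?thesis using empty h1 h2 by simp
  qed
qed

lemma cI_nn: assumes "V \<subseteq> {2..5}" shows "0 \<le> cI P5 V"
proof -
  have "0 \<le> (\<Sum>x\<in>hyp 5 V v. P5 x)" for v using P5_nn by (intro sum_nonneg) (auto simp: hyp_def)
  then show ?thesis using cI_ge[OF assms] order_trans by blast
qed

lemma w_pos: "j \<in> {6..21} \<Longrightarrow> 0 < w j"
  using del[of j] card_S_pos[of j] by (simp add: w_def)

lemma g_nn: "U \<subseteq> {2..21} \<Longrightarrow> 0 \<le> g U"
proof -
  assume U: "U \<subseteq> {2..21}"
  have "\<forall>j\<in>U - {2..5}. 0 \<le> w j"
  proof
    fix j assume "j \<in> U - {2..5}"
    then have "j \<in> {6..21}" using U by auto
    then show "0 \<le> w j" using w_pos less_imp_le by blast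
  qed
  then show ?thesis unfolding g_def using cI_nn[of "U \<inter> {2..5}"] by (auto intro!: mult_nonneg_nonneg prod_nonneg)
qed

lemma hyp_bound:
  assumes "5 \<le> k" "k \<le> 21"
  shows "V \<subseteq> {2..k} \<Longrightarrow> (\<Sum>z\<in>hyp k V v. P k z) \<le> g V"
  using assms
proof (induct k arbitrary: V rule: dec_induct)
  case base
  then have e0: "V - {2..5} = {}" by auto
  have e: "prod w (V - {2..5}) = 1" unfolding e0 by simp
  show ?case using cI_ge[of V v] base by (simp add: P5_eq g_def Int_absorb2 e)
next
  case (step n)
  let ?m = "Suc n"
  have k: "?m \<in> {6..21}" using step by simp
  have m2: "?m \<ge> 2" using step by simp
  have "(\<Sum>z\<in>hyp ?m V v. P ?m z) = (\<Sum>x\<in>Qset n. \<Sum>y\<in>S ?m.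
          if \<forall>j\<in>V. (x(?m:=y)) j = v j then P ?m (x(?m:=y)) else 0)"
    unfolding hyp_sum Qset_sum_split[OF m2] by simp
  also have "\<dots> \<le> (\<Sum>x\<in>Qset n. if \<forall>j\<in>V - {?m}. x j = v j then P n x * (if ?m \<in> V then w ?m else 1) else 0)"
  proof (rule sum_mono)
    fix x assume x: "x \<in> Qset n"
    have x': "x \<in> Qset (?m - 1)" using x by simp
    have p: "0 \<le> P (?m - 1) x" using P_nn x step by simp
    note ff = fiber_facts[OF k x' p]
    have cond: "(\<forall>j\<in>V. (x(?m:=y)) j = v j) \<longleftrightarrow> (\<forall>j\<in>V - {?m}. x j = v j) \<and> (?m \<in> V \<longrightarrow> y = v ?m)" for y
      by auto
    show "(\<Sum>y\<in>S ?m. if \<forall>j\<in>V. (x(?m:=y)) j = v j then P ?m (x(?m:=y)) else 0)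
        \<le> (if \<forall>j\<in>V - {?m}. x j = v j then P n x * (if ?m \<in> V then w ?m else 1) else 0)"
    proof (cases "\<forall>j\<in>V - {?m}. x j = v j")
      case False
      then have nc: "\<forall>y. \<not> (\<forall>j\<in>V. (x(?m:=y)) j = v j)" unfolding cond by blast
      have z: "(\<Sum>y\<in>S ?m. if \<forall>j\<in>V. (x(?m:=y)) j = v j then P ?m (x(?m:=y)) else 0) = 0"
        using nc by (intro sum.neutral ballI if_not_P) blast
      show ?thesis unfolding z if_not_P[OF False] by simp
    next
      case True
      show ?thesis
      proof (cases "?m \<in> V")
        case False
        then show ?thesis unfolding cond using True ff(1) by simp
      next
        case mV: True
        have "(\<Sum>y\<in>S ?m. if \<forall>j\<in>V. (x(?m:=y)) j = v j then P ?m (x(?m:=y)) else 0)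
            = (\<Sum>y\<in>S ?m. if y = v ?m then P ?m (x(?m:=y)) else 0)"
          unfolding cond using True mV by simp
        also have "\<dots> = (if v ?m \<in> S ?m then P ?m (x(?m:= v ?m)) else 0)"
          by (simp add: sum.delta)
        also have "\<dots> \<le> P n x * w ?m"
        proof -
          have wq: "P n x * w ?m = P n x / ((1 - \<delta> ?m) * real (card (S ?m)))" by (simp add: w_def)
          have wn: "0 \<le> P n x * w ?m" using p w_pos[OF k] by simp
          show ?thesis using ff(3)[of "v ?m"] wq wn by auto
        qed
        finally show ?thesis using True mV by simp
      qed
    qed
  qed
  also have "\<dots> = (if ?m \<in> V then w ?m else 1) * (\<Sum>z\<in>hyp n (V - {?m}) v. P n z)"
    unfolding hyp_sum by (simp add: sum_distrib_left mult.commute if_distrib cong: if_cong)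
  also have "\<dots> \<le> (if ?m \<in> V then w ?m else 1) * g (V - {?m})"
  proof (rule mult_left_mono)
    show "(\<Sum>z\<in>hyp n (V - {?m}) v. P n z) \<le> g (V - {?m})"
      using step by (intro step(3)) auto
    show "0 \<le> (if ?m \<in> V then w ?m else 1)" using w_pos[OF k] by simp
  qed
  also have "\<dots> = g V"
  proof (cases "?m \<in> V")
    case False then show ?thesis by simp
  next
    case True
    have fin: "finite (V - {?m} - {2..5})" using step finite_subset by (metis finite_Diff finite_atLeastAtMost)
    have e1: "V \<inter> {2..5} = (V - {?m}) \<inter> {2..5}" using step by auto
    have e2: "V - {2..5} = insert ?m (V - {?m} - {2..5})" using True step by auto
    show ?thesis using True fin unfolding g_def e1 e2 by (simp add: prod.insert)
  qed
  finally show ?case .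
qed

lemma g_insert:
  assumes "U \<subseteq> {2..n}" "5 \<le> n"
  shows "g (insert (Suc n) U) = g U * w (Suc n)"
proof -
  have fin: "finite (U - {2..5})" using assms finite_subset by blast
  have e1: "insert (Suc n) U \<inter> {2..5} = U \<inter> {2..5}" using assms by auto
  have e2: "insert (Suc n) U - {2..5} = insert (Suc n) (U - {2..5})" using assms by auto
  have nm: "Suc n \<notin> U - {2..5}" using assms by auto
  show ?thesis unfolding g_def e1 e2 using fin nm by (simp add: prod.insert)
qed

lemma gsum:
  assumes "5 \<le> m" "m \<le> 21"
  shows "(\<Sum>U\<in>Pow {2..m}. t ^ card U * g U) = ck P5 \<delta> m t"
  using assms
proof (induct m rule: dec_induct)
  case base
  have "\<And>U. U \<in> Pow {2..5} \<Longrightarrow> g U = cI P5 U"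
  proof -
    fix U assume "U \<in> Pow {2..(5::nat)}"
    then have e1: "U \<inter> {2..5} = U" and e2: "U - {2..5} = {}" by auto
    show "g U = cI P5 U" unfolding g_def e1 e2 by simp
  qed
  then show ?case unfolding ck_def c5_def by (simp add: mult.commute)
next
  case (step n)
  have ins: "{2..Suc n} = insert (Suc n) {2..n}" using step by auto
  have nn: "Suc n \<notin> {2..n}" by simp
  have c: "\<And>U. U \<in> Pow {2..n} \<Longrightarrow> card (insert (Suc n) U) = Suc (card U)"
    by (metis PowD card_insert_disjoint finite_atLeastAtMost finite_subset nn subsetD)
  have "(\<Sum>U\<in>Pow {2..Suc n}. t ^ card U * g U)
     = (\<Sum>U\<in>Pow {2..n}. t ^ card U * g U) + (\<Sum>U\<in>Pow {2..n}. t ^ card (insert (Suc n) U) * g (insert (Suc n) U))"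
    unfolding ins by (rule Pow_insert_sum) auto
  also have "(\<Sum>U\<in>Pow {2..n}. t ^ card (insert (Suc n) U) * g (insert (Suc n) U))
     = (t * w (Suc n)) * (\<Sum>U\<in>Pow {2..n}. t ^ card U * g U)"
    unfolding sum_distrib_left using c g_insert step by (intro sum.cong) auto
  also have "(\<Sum>U\<in>Pow {2..n}. t ^ card U * g U) = ck P5 \<delta> n t" using step by simp
  also have "ck P5 \<delta> n t + t * w (Suc n) * ck P5 \<delta> n t = ck P5 \<delta> (Suc n) t"
    unfolding ck_def using step by (simp add: prod.cl_ivl_Suc w_def algebra_simps)
  finally show ?case .
qed

lemma Bk_mass:
  assumes k: "k \<in> {6..21}"
  shows "(\<Sum>z\<in>Bk FF a k. P k z) = (\<Sum>x\<in>Qset (k-1). P (k-1) x * max 0 ((alpha FF a k x - \<delta> k) / (1 - \<delta> k)))"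
proof -
  have k2: "k \<ge> 2" using k by simp
  have "(\<Sum>z\<in>Bk FF a k. P k z) = (\<Sum>z\<in>Qset k. if z \<in> Bk FF a k then P k z else 0)"
  proof -
    have "Bk FF a k = {z \<in> Qset k. z \<in> Bk FF a k}" using Bk_sub by blast
    then show ?thesis by (metis (no_types) Qset_fin sum.inter_filter)
  qed
  also have "\<dots> = (\<Sum>x\<in>Qset (k-1). \<Sum>y\<in>S k. if x(k:=y) \<in> Bk FF a k then P k (x(k:=y)) else 0)"
    by (rule Qset_sum_split[OF k2])
  also have "\<dots> = (\<Sum>x\<in>Qset (k-1). \<Sum>y\<in>J k x. P k (x(k:=y)))"
    unfolding J_def by (simp add: sum.inter_filter)
  also have "\<dots> = (\<Sum>x\<in>Qset (k-1). P (k-1) x * max 0 ((alpha FF a k x - \<delta> k) / (1 - \<delta> k)))"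
  proof (rule sum.cong)
    fix x assume x: "x \<in> Qset (k-1)"
    have kk: "5 \<le> k-1" "k-1 \<le> 21" using k by auto
    have p: "0 \<le> P (k-1) x" using P_nn[OF kk x] .
    show "(\<Sum>y\<in>J k x. P k (x(k:=y))) = P (k-1) x * max 0 ((alpha FF a k x - \<delta> k) / (1 - \<delta> k))"
      by (rule fiber_facts(2)[OF k x p])
  qed simp
  finally show ?thesis .
qed

definition N :: "nat \<Rightarrow> nat set set" where "N k = {F \<in> FF. k \<in> F \<and> F \<subseteq> {2..k}}"
definition H :: "nat \<Rightarrow> nat set \<Rightarrow> (nat \<Rightarrow> nat) set" where "H k F = hyp (k-1) (F - {k}) (a F)"

lemma N_fin: "finite (N k)"
proof -
  have "N k \<subseteq> Pow {2..k}" by (auto simp: N_def)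
  then show ?thesis using finite_subset by blast
qed

lemma J_card:
  assumes x: "x \<in> Qset (k-1)"
  shows "card (J k x) \<le> card {F \<in> N k. x \<in> H k F}"
proof -
  have "J k x \<subseteq> (\<lambda>F. a F k) ` {F \<in> N k. x \<in> H k F}"
  proof
    fix y assume y: "y \<in> J k x"
    then obtain F where F: "F \<in> FF" "k \<in> F" "F \<subseteq> {2..k}" "x(k:=y) \<in> hyp k F (a F)"
      unfolding J_def Bk_def by auto
    have "y = a F k" using F(2,4) unfolding hyp_def by force
    moreover have "x \<in> H k F"
    proof -
      have "\<forall>j\<in>F - {k}. x j = a F j"
      proof
        fix j assume j: "j \<in> F - {k}"
        then have "(x(k:=y)) j = a F j" using F(4) unfolding hyp_def by blast
        then show "x j = a F j" using j by simp
      qed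
      then show ?thesis using x unfolding H_def hyp_def by blast
    qed
    ultimately show "y \<in> (\<lambda>F. a F k) ` {F \<in> N k. x \<in> H k F}" using F by (auto simp: N_def)
  qed
  then have "card (J k x) \<le> card ((\<lambda>F. a F k) ` {F \<in> N k. x \<in> H k F})"
    using N_fin by (intro card_mono) auto
  also have "\<dots> \<le> card {F \<in> N k. x \<in> H k F}" using N_fin by (intro card_image_le) auto
  finally show ?thesis .
qed

lemma second_moment:
  assumes k: "k \<in> {6..21}"
  shows "(\<Sum>x\<in>Qset (k-1). P (k-1) x * (real (card {F \<in> N k. x \<in> H k F}))^2)
     \<le> (\<Sum>G\<in>Pow {2..k-1} - {{}}. \<Sum>G'\<in>Pow {2..k-1} - {{}}. g (G \<union> G'))"
proof -
  have kk: "5 \<le> k-1" "k-1 \<le> 21" using k by auto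
  let ?ind = "\<lambda>x F. (if x \<in> H k F then 1 else 0) :: real"
  have c: "\<And>x. real (card {F \<in> N k. x \<in> H k F}) = (\<Sum>F\<in>N k. ?ind x F)"
    using N_fin by (simp add: sum.inter_filter[symmetric])
  have "(\<Sum>x\<in>Qset (k-1). P (k-1) x * (real (card {F \<in> N k. x \<in> H k F}))^2)
      = (\<Sum>x\<in>Qset (k-1). \<Sum>F\<in>N k. \<Sum>F'\<in>N k. P (k-1) x * (?ind x F * ?ind x F'))"
    unfolding c power2_eq_square sum_product by (simp add: sum_distrib_left)
  also have "\<dots> = (\<Sum>F\<in>N k. \<Sum>F'\<in>N k. \<Sum>x\<in>Qset (k-1). P (k-1) x * (?ind x F * ?ind x F'))"
    by (rule sum_swap3)
  also have "\<dots> \<le> (\<Sum>F\<in>N k. \<Sum>F'\<in>N k. g ((F - {k}) \<union> (F' - {k})))"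
  proof (intro sum_mono)
    fix F F' assume F: "F \<in> N k" and F': "F' \<in> N k"
    define v where "v = (\<lambda>j. if j \<in> F - {k} then a F j else a F' j)"
    have sub: "(F - {k}) \<union> (F' - {k}) \<subseteq> {2..k-1}" using F F' diff_sub[of F k] diff_sub[of F' k] by (simp add: N_def)
    have "(\<Sum>x\<in>Qset (k-1). P (k-1) x * (?ind x F * ?ind x F'))
        \<le> (\<Sum>x\<in>Qset (k-1). if \<forall>j\<in>(F - {k}) \<union> (F' - {k}). x j = v j then P (k-1) x else 0)"
    proof (rule sum_mono)
      fix x assume x: "x \<in> Qset (k-1)"
      have p: "0 \<le> P (k-1) x" using P_nn[OF kk x] .
      show "P (k-1) x * (?ind x F * ?ind x F') \<le> (if \<forall>j\<in>(F - {k}) \<union> (F' - {k}). x j = v j then P (k-1) x else 0)"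
      proof (cases "x \<in> H k F \<and> x \<in> H k F'")
        case True
        then have "\<forall>j\<in>(F - {k}) \<union> (F' - {k}). x j = v j" unfolding H_def hyp_def v_def by auto
        then show ?thesis using True by simp
      next
        case False then show ?thesis using p by auto
      qed
    qed
    also have "\<dots> = (\<Sum>x\<in>hyp (k-1) ((F - {k}) \<union> (F' - {k})) v. P (k-1) x)" by (simp only: hyp_sum)
    also have "\<dots> \<le> g ((F - {k}) \<union> (F' - {k}))" by (rule hyp_bound[OF kk sub])
    finally show "(\<Sum>x\<in>Qset (k-1). P (k-1) x * (?ind x F * ?ind x F')) \<le> g ((F - {k}) \<union> (F' - {k}))" .
  qed
  also have "\<dots> = (\<Sum>G\<in>(\<lambda>F. F - {k}) ` N k. \<Sum>G'\<in>(\<lambda>F. F - {k}) ` N k. g (G \<union> G'))"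
  proof -
    have inj: "inj_on (\<lambda>F. F - {k}) (N k)"
      unfolding inj_on_def N_def by (metis (mono_tags, lifting) insert_Diff mem_Collect_eq)
    show ?thesis by (simp add: sum.reindex[OF inj])
  qed
  also have "\<dots> \<le> (\<Sum>G\<in>Pow {2..k-1} - {{}}. \<Sum>G'\<in>Pow {2..k-1} - {{}}. g (G \<union> G'))"
  proof -
    let ?D = "(\<lambda>F. F - {k}) ` N k" and ?E = "Pow {2..k-1} - {{}}"
    have DE: "?D \<subseteq> ?E"
    proof
      fix G assume "G \<in> ?D"
      then obtain F where F: "F \<in> N k" "G = F - {k}" by blast
      have "G \<noteq> {}"
      proof
        assume "G = {}"
        then have "F = {k}" using F by (auto simp: N_def)
        then show False using vc[of F k] F k by (auto simp: N_def)
      qed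
      moreover have "G \<subseteq> {2..k-1}" using F diff_sub[of F k] by (simp add: N_def)
      ultimately show "G \<in> ?E" by simp
    qed
    have finE: "finite ?E" by simp
    have gn: "\<And>G G'. G \<in> ?E \<Longrightarrow> G' \<in> ?E \<Longrightarrow> 0 \<le> g (G \<union> G')"
    proof -
      fix G G' assume "G \<in> ?E" "G' \<in> ?E"
      moreover have "{2..k-1} \<subseteq> {2..21}" using k by auto
      ultimately have "G \<union> G' \<subseteq> {2..21}" by blast
      then show "0 \<le> g (G \<union> G')" by (rule g_nn)
    qed
    have "(\<Sum>G\<in>?D. \<Sum>G'\<in>?D. g (G \<union> G')) \<le> (\<Sum>G\<in>?D. \<Sum>G'\<in>?E. g (G \<union> G'))"
    proof (rule sum_mono)
      fix G assume "G \<in> ?D"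
      then have G: "G \<in> ?E" using DE by blast
      show "(\<Sum>G'\<in>?D. g (G \<union> G')) \<le> (\<Sum>G'\<in>?E. g (G \<union> G'))"
      proof (rule sum_mono2[OF finE DE])
        fix G' assume "G' \<in> ?E - ?D"
        then have G': "G' \<in> ?E" by blast
        show "0 \<le> g (G \<union> G')" by (rule gn[OF G G'])
      qed
    qed
    also have "\<dots> \<le> (\<Sum>G\<in>?E. \<Sum>G'\<in>?E. g (G \<union> G'))"
    proof (rule sum_mono2[OF finE DE])
      fix G assume "G \<in> ?E - ?D"
      then have G: "G \<in> ?E" by blast
      show "0 \<le> (\<Sum>G'\<in>?E. g (G \<union> G'))"
        by (rule sum_nonneg) (rule gn[OF G])
    qed
    finally show ?thesis .
  qed
  finally show ?thesis .
qed

lemma cI_empty: "cI P5 {} = 1"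
proof -
  have "PiE {} S = {\<lambda>_. undefined}" by simp
  moreover have "hyp 5 {} v = Qset 5" for v by (simp add: hyp_def)
  ultimately show ?thesis unfolding cI_def using P5_sum by simp
qed

lemma g_empty: "g {} = 1"
  by (simp add: g_def cI_empty)

lemma Bk_bound:
  assumes k: "k \<in> {6..21}" and M0: "0 \<le> M"
    and M: "\<And>j. j \<le> card (S k) \<Longrightarrow>
      max 0 ((real j / real (card (S k)) - \<delta> k) / (1 - \<delta> k)) \<le> M * (real j / real (card (S k)))^2"
  shows "(\<Sum>z\<in>Bk FF a k. P k z) \<le> M / (real (card (S k)))^2 *
           (ck P5 \<delta> (k-1) 3 - 2 * ck P5 \<delta> (k-1) 1 + 1)"
proof -
  have kk: "5 \<le> k-1" "k-1 \<le> 21" using k by auto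
  define s where "s = real (card (S k))"
  have s0: "s > 0" using card_S_pos s_def by simp
  have "(\<Sum>z\<in>Bk FF a k. P k z) = (\<Sum>x\<in>Qset (k-1). P (k-1) x * max 0 ((alpha FF a k x - \<delta> k) / (1 - \<delta> k)))"
    by (rule Bk_mass[OF k])
  also have "\<dots> \<le> (\<Sum>x\<in>Qset (k-1). P (k-1) x * (M / s^2 * (real (card {F \<in> N k. x \<in> H k F}))^2))"
  proof (rule sum_mono)
    fix x assume x: "x \<in> Qset (k-1)"
    have p: "0 \<le> P (k-1) x" using P_nn[OF kk x] .
    have jle: "card (J k x) \<le> card (S k)" using J_sub[of k x] by (intro card_mono) auto
    have "max 0 ((alpha FF a k x - \<delta> k) / (1 - \<delta> k)) \<le> M * (real (card (J k x)) / s)^2"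
      using M[OF jle] by (simp add: alpha_J s_def)
    also have "\<dots> = M / s^2 * (real (card (J k x)))^2" by (simp add: power_divide)
    also have "\<dots> \<le> M / s^2 * (real (card {F \<in> N k. x \<in> H k F}))^2"
      using J_card[OF x] M0 s0 by (intro mult_left_mono power_mono) auto
    finally show "P (k-1) x * max 0 ((alpha FF a k x - \<delta> k) / (1 - \<delta> k))
        \<le> P (k-1) x * (M / s^2 * (real (card {F \<in> N k. x \<in> H k F}))^2)"
      using p by (intro mult_left_mono)
  qed
  also have "\<dots> = M / s^2 * (\<Sum>x\<in>Qset (k-1). P (k-1) x * (real (card {F \<in> N k. x \<in> H k F}))^2)"
    by (simp add: sum_distrib_left algebra_simps)
  also have "\<dots> \<le> M / s^2 * (\<Sum>G\<in>Pow {2..k-1} - {{}}. \<Sum>G'\<in>Pow {2..k-1} - {{}}. g (G \<union> G'))"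
    using second_moment[OF k] M0 s0 by (intro mult_left_mono) auto
  also have "(\<Sum>G\<in>Pow {2..k-1} - {{}}. \<Sum>G'\<in>Pow {2..k-1} - {{}}. g (G \<union> G'))
      = ck P5 \<delta> (k-1) 3 - 2 * ck P5 \<delta> (k-1) 1 + 1"
  proof -
    have "(\<Sum>G\<in>Pow {2..k-1} - {{}}. \<Sum>G'\<in>Pow {2..k-1} - {{}}. g (G \<union> G'))
       = (\<Sum>U\<in>Pow {2..k-1}. 3 ^ card U * g U) - 2 * (\<Sum>G\<in>Pow {2..k-1}. g G) + g {}"
      using pairs_sum_ne[of "{2..k-1}" g] pairs_sum[of "{2..k-1}" g] by simp
    also have "(\<Sum>U\<in>Pow {2..k-1}. 3 ^ card U * g U) = ck P5 \<delta> (k-1) 3" by (rule gsum[OF kk])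
    also have "(\<Sum>G\<in>Pow {2..k-1}. g G) = ck P5 \<delta> (k-1) 1" using gsum[OF kk, of 1] by simp
    finally show ?thesis by (simp add: g_empty)
  qed
  finally show ?thesis by (simp add: s_def)
qed

lemma mu_bound:
  assumes M0: "\<And>k. k \<in> {6..21} \<Longrightarrow> 0 \<le> M k"
    and M: "\<And>k j. k \<in> {6..21} \<Longrightarrow> j \<le> card (S k) \<Longrightarrow>
      max 0 ((real j / real (card (S k)) - \<delta> k) / (1 - \<delta> k)) \<le> M k * (real j / real (card (S k)))^2"
  shows "mu FF a P5 \<delta> 21 \<ge> 1 - (\<Sum>k=6..21. M k / (real (card (S k)))^2 *
           (ck P5 \<delta> (k-1) 3 - 2 * ck P5 \<delta> (k-1) 1 + 1))"
proof -
  have "(\<Sum>k=6..21. \<Sum>z\<in>Bk FF a k. P k z) \<le> (\<Sum>k=6..21. M k / (real (card (S k)))^2 *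
           (ck P5 \<delta> (k-1) 3 - 2 * ck P5 \<delta> (k-1) 1 + 1))"
    by (intro sum_mono Bk_bound M0 M) auto
  then show ?thesis unfolding mu_def by simp
qed

lemma XY_facts:
  shows "c5 P5 3 \<ge> 3 * c5 P5 1 - 2" "c5 P5 3 \<le> 81 * c5 P5 1 - 80" "c5 P5 1 \<ge> 1" "c5 P5 3 \<ge> 1"
proof -
  let ?E = "Pow {2..5::nat} - {{}}"
  have fin: "finite ?E" by simp
  have split: "\<And>h::nat set \<Rightarrow> real. (\<Sum>I\<in>Pow {2..5}. h I) = h {} + (\<Sum>I\<in>?E. h I)"
    by (simp add: sum_diff1)
  have cn: "\<And>I. I \<in> ?E \<Longrightarrow> 0 \<le> cI P5 I" using cI_nn by auto
  have cardI: "\<And>I. I \<in> ?E \<Longrightarrow> 1 \<le> card I \<and> card I \<le> 4"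
  proof -
    fix I assume I: "I \<in> ?E"
    then have "I \<subseteq> {2..5}" "I \<noteq> {}" by auto
    moreover have "finite I" using I finite_subset by blast
    ultimately show "1 \<le> card I \<and> card I \<le> 4"
      using card_mono[of "{2..5::nat}" I] by (auto simp: Suc_le_eq card_gt_0_iff)
  qed
  have p3: "\<And>I. I \<in> ?E \<Longrightarrow> (3::real) \<le> 3 ^ card I \<and> (3::real) ^ card I \<le> 81"
  proof -
    fix I assume I: "I \<in> ?E"
    have "(3::real) ^ 1 \<le> 3 ^ card I" using cardI[OF I] by (intro power_increasing) auto
    moreover have "(3::real) ^ card I \<le> 3 ^ 4" using cardI[OF I] by (intro power_increasing) auto
    ultimately show "(3::real) \<le> 3 ^ card I \<and> (3::real) ^ card I \<le> 81" by simp
  qed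
  have X: "c5 P5 3 = 1 + (\<Sum>I\<in>?E. cI P5 I * 3 ^ card I)"
    unfolding c5_def split by (simp add: cI_empty)
  have Y: "c5 P5 1 = 1 + (\<Sum>I\<in>?E. cI P5 I)"
    unfolding c5_def split by (simp add: cI_empty)
  have a: "(\<Sum>I\<in>?E. 3 * cI P5 I) \<le> (\<Sum>I\<in>?E. cI P5 I * 3 ^ card I)"
    using cn p3 by (intro sum_mono) (simp add: mult.commute mult_left_mono)
  have b: "(\<Sum>I\<in>?E. cI P5 I * 3 ^ card I) \<le> (\<Sum>I\<in>?E. 81 * cI P5 I)"
    using cn p3 by (intro sum_mono) (simp add: mult.commute mult_left_mono)
  have c: "0 \<le> (\<Sum>I\<in>?E. cI P5 I)" using cn by (intro sum_nonneg) auto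
  have d: "0 \<le> (\<Sum>I\<in>?E. cI P5 I * 3 ^ card I)" using cn by (intro sum_nonneg) auto
  show "c5 P5 3 \<ge> 3 * c5 P5 1 - 2" using a X Y by (simp add: sum_distrib_left[symmetric])
  show "c5 P5 3 \<le> 81 * c5 P5 1 - 80" using b X Y by (simp add: sum_distrib_left[symmetric])
  show "c5 P5 1 \<ge> 1" using c Y by simp
  show "c5 P5 3 \<ge> 1" using d X by simp
qed

end


lemma e621: "{6..(21::nat)} = {6..<22}" by auto

lemma en0: "enumerate {p::nat. prime p} 0 = 2"
  by (simp add: enumerate_0 Least_equality prime_ge_2_nat)

lemma en1: "enumerate {p::nat. prime p} 1 = 3"
proof -
  have "enumerate {p::nat. prime p} (Suc 0) = 3"
    by (rule enum_primes_step[OF en0]) (auto simp: prime_nat_iff' atLeastLessThan_nat_numeral)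
  then show ?thesis by (simp add: numeral_eq_Suc)
qed

lemma en2: "enumerate {p::nat. prime p} 2 = 5"
proof -
  have "enumerate {p::nat. prime p} (Suc 1) = 5"
    by (rule enum_primes_step[OF en1]) (auto simp: prime_nat_iff' atLeastLessThan_nat_numeral)
  then show ?thesis by (simp add: numeral_eq_Suc)
qed

lemma en3: "enumerate {p::nat. prime p} 3 = 7"
proof -
  have "enumerate {p::nat. prime p} (Suc 2) = 7"
    by (rule enum_primes_step[OF en2]) (auto simp: prime_nat_iff' atLeastLessThan_nat_numeral)
  then show ?thesis by (simp add: numeral_eq_Suc)
qed

lemma en4: "enumerate {p::nat. prime p} 4 = 11"
proof -
  have "enumerate {p::nat. prime p} (Suc 3) = 11"
    by (rule enum_primes_step[OF en3]) (auto simp: prime_nat_iff' atLeastLessThan_nat_numeral)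
  then show ?thesis by (simp add: numeral_eq_Suc)
qed

lemma en5: "enumerate {p::nat. prime p} 5 = 13"
proof -
  have "enumerate {p::nat. prime p} (Suc 4) = 13"
    by (rule enum_primes_step[OF en4]) (auto simp: prime_nat_iff' atLeastLessThan_nat_numeral)
  then show ?thesis by (simp add: numeral_eq_Suc)
qed

lemma en6: "enumerate {p::nat. prime p} 6 = 17"
proof -
  have "enumerate {p::nat. prime p} (Suc 5) = 17"
    by (rule enum_primes_step[OF en5]) (auto simp: prime_nat_iff' atLeastLessThan_nat_numeral)
  then show ?thesis by (simp add: numeral_eq_Suc)
qed

lemma en7: "enumerate {p::nat. prime p} 7 = 19"
proof -
  have "enumerate {p::nat. prime p} (Suc 6) = 19"
    by (rule enum_primes_step[OF en6]) (auto simp: prime_nat_iff' atLeastLessThan_nat_numeral)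
  then show ?thesis by (simp add: numeral_eq_Suc)
qed

lemma en8: "enumerate {p::nat. prime p} 8 = 23"
proof -
  have "enumerate {p::nat. prime p} (Suc 7) = 23"
    by (rule enum_primes_step[OF en7]) (auto simp: prime_nat_iff' atLeastLessThan_nat_numeral)
  then show ?thesis by (simp add: numeral_eq_Suc)
qed

lemma en9: "enumerate {p::nat. prime p} 9 = 29"
proof -
  have "enumerate {p::nat. prime p} (Suc 8) = 29"
    by (rule enum_primes_step[OF en8]) (auto simp: prime_nat_iff' atLeastLessThan_nat_numeral)
  then show ?thesis by (simp add: numeral_eq_Suc)
qed

lemma en10: "enumerate {p::nat. prime p} 10 = 31"
proof -
  have "enumerate {p::nat. prime p} (Suc 9) = 31"
    by (rule enum_primes_step[OF en9]) (auto simp: prime_nat_iff' atLeastLessThan_nat_numeral)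
  then show ?thesis by (simp add: numeral_eq_Suc)
qed

lemma en11: "enumerate {p::nat. prime p} 11 = 37"
proof -
  have "enumerate {p::nat. prime p} (Suc 10) = 37"
    by (rule enum_primes_step[OF en10]) (auto simp: prime_nat_iff' atLeastLessThan_nat_numeral)
  then show ?thesis by (simp add: numeral_eq_Suc)
qed

lemma en12: "enumerate {p::nat. prime p} 12 = 41"
proof -
  have "enumerate {p::nat. prime p} (Suc 11) = 41"
    by (rule enum_primes_step[OF en11]) (auto simp: prime_nat_iff' atLeastLessThan_nat_numeral)
  then show ?thesis by (simp add: numeral_eq_Suc)
qed

lemma en13: "enumerate {p::nat. prime p} 13 = 43"
proof -
  have "enumerate {p::nat. prime p} (Suc 12) = 43"
    by (rule enum_primes_step[OF en12]) (auto simp: prime_nat_iff' atLeastLessThan_nat_numeral)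
  then show ?thesis by (simp add: numeral_eq_Suc)
qed

lemma en14: "enumerate {p::nat. prime p} 14 = 47"
proof -
  have "enumerate {p::nat. prime p} (Suc 13) = 47"
    by (rule enum_primes_step[OF en13]) (auto simp: prime_nat_iff' atLeastLessThan_nat_numeral)
  then show ?thesis by (simp add: numeral_eq_Suc)
qed

lemma en15: "enumerate {p::nat. prime p} 15 = 53"
proof -
  have "enumerate {p::nat. prime p} (Suc 14) = 53"
    by (rule enum_primes_step[OF en14]) (auto simp: prime_nat_iff' atLeastLessThan_nat_numeral)
  then show ?thesis by (simp add: numeral_eq_Suc)
qed

lemma en16: "enumerate {p::nat. prime p} 16 = 59"
proof -
  have "enumerate {p::nat. prime p} (Suc 15) = 59"
    by (rule enum_primes_step[OF en15]) (auto simp: prime_nat_iff' atLeastLessThan_nat_numeral)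
  then show ?thesis by (simp add: numeral_eq_Suc)
qed

lemma en17: "enumerate {p::nat. prime p} 17 = 61"
proof -
  have "enumerate {p::nat. prime p} (Suc 16) = 61"
    by (rule enum_primes_step[OF en16]) (auto simp: prime_nat_iff' atLeastLessThan_nat_numeral)
  then show ?thesis by (simp add: numeral_eq_Suc)
qed

lemma en18: "enumerate {p::nat. prime p} 18 = 67"
proof -
  have "enumerate {p::nat. prime p} (Suc 17) = 67"
    by (rule enum_primes_step[OF en17]) (auto simp: prime_nat_iff' atLeastLessThan_nat_numeral)
  then show ?thesis by (simp add: numeral_eq_Suc)
qed

lemma en19: "enumerate {p::nat. prime p} 19 = 71"
proof -
  have "enumerate {p::nat. prime p} (Suc 18) = 71"
    by (rule enum_primes_step[OF en18]) (auto simp: prime_nat_iff' atLeastLessThan_nat_numeral)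
  then show ?thesis by (simp add: numeral_eq_Suc)
qed

lemma en20: "enumerate {p::nat. prime p} 20 = 73"
proof -
  have "enumerate {p::nat. prime p} (Suc 19) = 73"
    by (rule enum_primes_step[OF en19]) (auto simp: prime_nat_iff' atLeastLessThan_nat_numeral)
  then show ?thesis by (simp add: numeral_eq_Suc)
qed

lemma cardS6: "card (S 6) = 12"
  by (simp add: S_def pk_def en5)

lemma cardS7: "card (S 7) = 16"
  by (simp add: S_def pk_def en6)

lemma cardS8: "card (S 8) = 18"
  by (simp add: S_def pk_def en7)

lemma cardS9: "card (S 9) = 22"
  by (simp add: S_def pk_def en8)

lemma cardS10: "card (S 10) = 28"
  by (simp add: S_def pk_def en9)

lemma cardS11: "card (S 11) = 30"
  by (simp add: S_def pk_def en10)

lemma cardS12: "card (S 12) = 36"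
  by (simp add: S_def pk_def en11)

lemma cardS13: "card (S 13) = 40"
  by (simp add: S_def pk_def en12)

lemma cardS14: "card (S 14) = 42"
  by (simp add: S_def pk_def en13)

lemma cardS15: "card (S 15) = 46"
  by (simp add: S_def pk_def en14)

lemma cardS16: "card (S 16) = 52"
  by (simp add: S_def pk_def en15)

lemma cardS17: "card (S 17) = 58"
  by (simp add: S_def pk_def en16)

lemma cardS18: "card (S 18) = 60"
  by (simp add: S_def pk_def en17)

lemma cardS19: "card (S 19) = 66"
  by (simp add: S_def pk_def en18)

lemma cardS20: "card (S 20) = 70"
  by (simp add: S_def pk_def en19)

lemma cardS21: "card (S 21) = 72"
  by (simp add: S_def pk_def en20)

definition dd :: "nat \<Rightarrow> real" where "dd j = (if j = 6 then (93/500::real) else (if j = 7 then (101/500::real) else (if j = 8 then (47/200::real) else (if j = 9 then (119/500::real) else (if j = 10 then (223/1000::real) else (if j = 11 then (241/1000::real) else (if j = 12 then (229/1000::real) else (if j = 13 then (239/1000::real) else (if j = 14 then (61/250::real) else (if j = 15 then (49/200::real) else (if j = 16 then (49/200::real) else (if j = 17 then (123/500::real) else (if j = 18 then (127/500::real) else (if j = 19 then (127/500::real) else (if j = 20 then (127/500::real) else (if j = 21 then (261/1000::real) else 1/4))))))))))))))))"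

definition MM :: "nat \<Rightarrow> real" where "MM k = (if k = 6 then (408059/250000::real) else (if k = 7 then (770907/500000::real) else (if k = 8 then (138603/100000::real) else (if k = 9 then (687717/500000::real) else (if k = 10 then (1440589/1000000::real) else (if k = 11 then (5461/4000::real) else (if k = 12 then (1414673/1000000::real) else (if k = 13 then (687243/500000::real) else (if k = 14 then (677249/500000::real) else (if k = 15 then (675497/500000::real) else (if k = 16 then (337759/250000::real) else (if k = 17 then (1347481/1000000::real) else (if k = 18 then (263807/200000::real) else (if k = 19 then (1319119/1000000::real) else (if k = 20 then (164897/125000::real) else (if k = 21 then (259199/200000::real) else 0))))))))))))))))"

lemma dd6: "dd 6 = (93/500::real)" by (simp add: dd_def)

lemma MM6: "MM 6 = (408059/250000::real)" by (simp add: MM_def)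

lemma dd7: "dd 7 = (101/500::real)" by (simp add: dd_def)

lemma MM7: "MM 7 = (770907/500000::real)" by (simp add: MM_def)

lemma dd8: "dd 8 = (47/200::real)" by (simp add: dd_def)

lemma MM8: "MM 8 = (138603/100000::real)" by (simp add: MM_def)

lemma dd9: "dd 9 = (119/500::real)" by (simp add: dd_def)

lemma MM9: "MM 9 = (687717/500000::real)" by (simp add: MM_def)

lemma dd10: "dd 10 = (223/1000::real)" by (simp add: dd_def)

lemma MM10: "MM 10 = (1440589/1000000::real)" by (simp add: MM_def)

lemma dd11: "dd 11 = (241/1000::real)" by (simp add: dd_def)

lemma MM11: "MM 11 = (5461/4000::real)" by (simp add: MM_def)

lemma dd12: "dd 12 = (229/1000::real)" by (simp add: dd_def)

lemma MM12: "MM 12 = (1414673/1000000::real)" by (simp add: MM_def)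

lemma dd13: "dd 13 = (239/1000::real)" by (simp add: dd_def)

lemma MM13: "MM 13 = (687243/500000::real)" by (simp add: MM_def)

lemma dd14: "dd 14 = (61/250::real)" by (simp add: dd_def)

lemma MM14: "MM 14 = (677249/500000::real)" by (simp add: MM_def)

lemma dd15: "dd 15 = (49/200::real)" by (simp add: dd_def)

lemma MM15: "MM 15 = (675497/500000::real)" by (simp add: MM_def)

lemma dd16: "dd 16 = (49/200::real)" by (simp add: dd_def)

lemma MM16: "MM 16 = (337759/250000::real)" by (simp add: MM_def)

lemma dd17: "dd 17 = (123/500::real)" by (simp add: dd_def)

lemma MM17: "MM 17 = (1347481/1000000::real)" by (simp add: MM_def)

lemma dd18: "dd 18 = (127/500::real)" by (simp add: dd_def)

lemma MM18: "MM 18 = (263807/200000::real)" by (simp add: MM_def)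

lemma dd19: "dd 19 = (127/500::real)" by (simp add: dd_def)

lemma MM19: "MM 19 = (1319119/1000000::real)" by (simp add: MM_def)

lemma dd20: "dd 20 = (127/500::real)" by (simp add: dd_def)

lemma MM20: "MM 20 = (164897/125000::real)" by (simp add: MM_def)

lemma dd21: "dd 21 = (261/1000::real)" by (simp add: dd_def)

lemma MM21: "MM 21 = (259199/200000::real)" by (simp add: MM_def)

lemma k_cases: "k \<in> {6..(21::nat)} \<Longrightarrow> k = 6 \<or> k = 7 \<or> k = 8 \<or> k = 9 \<or> k = 10 \<or> k = 11 \<or> k = 12 \<or> k = 13 \<or> k = 14 \<or> k = 15 \<or> k = 16 \<or> k = 17 \<or> k = 18 \<or> k = 19 \<or> k = 20 \<or> k = 21"
  unfolding e621 by (auto simp: atLeastLessThan_nat_numeral)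

lemma dd_range: "j \<in> {6..21} \<Longrightarrow> 0 < dd j \<and> dd j \<le> 1/2"
  by (drule k_cases) (auto simp: dd_def)

lemma MM_nn: "k \<in> {6..21} \<Longrightarrow> 0 \<le> MM k"
  by (drule k_cases) (auto simp: MM_def)

lemma Mk6: "max 0 ((real j / real (card (S 6)) - dd 6) / (1 - dd 6)) \<le> MM 6 * (real j / real (card (S 6)))^2"
  unfolding cardS6 dd6 MM6 by (rule Mprop[of 12 _ _ 4]) simp_all

lemma Mk7: "max 0 ((real j / real (card (S 7)) - dd 7) / (1 - dd 7)) \<le> MM 7 * (real j / real (card (S 7)))^2"
  unfolding cardS7 dd7 MM7 by (rule Mprop[of 16 _ _ 6]) simp_all

lemma Mk8: "max 0 ((real j / real (card (S 8)) - dd 8) / (1 - dd 8)) \<le> MM 8 * (real j / real (card (S 8)))^2"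
  unfolding cardS8 dd8 MM8 by (rule Mprop[of 18 _ _ 8]) simp_all

lemma Mk9: "max 0 ((real j / real (card (S 9)) - dd 9) / (1 - dd 9)) \<le> MM 9 * (real j / real (card (S 9)))^2"
  unfolding cardS9 dd9 MM9 by (rule Mprop[of 22 _ _ 10]) simp_all

lemma Mk10: "max 0 ((real j / real (card (S 10)) - dd 10) / (1 - dd 10)) \<le> MM 10 * (real j / real (card (S 10)))^2"
  unfolding cardS10 dd10 MM10 by (rule Mprop[of 28 _ _ 12]) simp_all

lemma Mk11: "max 0 ((real j / real (card (S 11)) - dd 11) / (1 - dd 11)) \<le> MM 11 * (real j / real (card (S 11)))^2"
  unfolding cardS11 dd11 MM11 by (rule Mprop[of 30 _ _ 14]) simp_all

lemma Mk12: "max 0 ((real j / real (card (S 12)) - dd 12) / (1 - dd 12)) \<le> MM 12 * (real j / real (card (S 12)))^2"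
  unfolding cardS12 dd12 MM12 by (rule Mprop[of 36 _ _ 16]) simp_all

lemma Mk13: "max 0 ((real j / real (card (S 13)) - dd 13) / (1 - dd 13)) \<le> MM 13 * (real j / real (card (S 13)))^2"
  unfolding cardS13 dd13 MM13 by (rule Mprop[of 40 _ _ 19]) simp_all

lemma Mk14: "max 0 ((real j / real (card (S 14)) - dd 14) / (1 - dd 14)) \<le> MM 14 * (real j / real (card (S 14)))^2"
  unfolding cardS14 dd14 MM14 by (rule Mprop[of 42 _ _ 20]) simp_all

lemma Mk15: "max 0 ((real j / real (card (S 15)) - dd 15) / (1 - dd 15)) \<le> MM 15 * (real j / real (card (S 15)))^2"
  unfolding cardS15 dd15 MM15 by (rule Mprop[of 46 _ _ 22]) simp_all

lemma Mk16: "max 0 ((real j / real (card (S 16)) - dd 16) / (1 - dd 16)) \<le> MM 16 * (real j / real (card (S 16)))^2"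
  unfolding cardS16 dd16 MM16 by (rule Mprop[of 52 _ _ 25]) simp_all

lemma Mk17: "max 0 ((real j / real (card (S 17)) - dd 17) / (1 - dd 17)) \<le> MM 17 * (real j / real (card (S 17)))^2"
  unfolding cardS17 dd17 MM17 by (rule Mprop[of 58 _ _ 28]) simp_all

lemma Mk18: "max 0 ((real j / real (card (S 18)) - dd 18) / (1 - dd 18)) \<le> MM 18 * (real j / real (card (S 18)))^2"
  unfolding cardS18 dd18 MM18 by (rule Mprop[of 60 _ _ 30]) simp_all

lemma Mk19: "max 0 ((real j / real (card (S 19)) - dd 19) / (1 - dd 19)) \<le> MM 19 * (real j / real (card (S 19)))^2"
  unfolding cardS19 dd19 MM19 by (rule Mprop[of 66 _ _ 33]) simp_all

lemma Mk20: "max 0 ((real j / real (card (S 20)) - dd 20) / (1 - dd 20)) \<le> MM 20 * (real j / real (card (S 20)))^2"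
  unfolding cardS20 dd20 MM20 by (rule Mprop[of 70 _ _ 35]) simp_all

lemma Mk21: "max 0 ((real j / real (card (S 21)) - dd 21) / (1 - dd 21)) \<le> MM 21 * (real j / real (card (S 21)))^2"
  unfolding cardS21 dd21 MM21 by (rule Mprop[of 72 _ _ 37]) simp_all

lemma M_all: "k \<in> {6..21} \<Longrightarrow> max 0 ((real j / real (card (S k)) - dd k) / (1 - dd k)) \<le> MM k * (real j / real (card (S k)))^2"
  by (drule k_cases) (auto simp only: Mk6 Mk7 Mk8 Mk9 Mk10 Mk11 Mk12 Mk13 Mk14 Mk15 Mk16 Mk17 Mk18 Mk19 Mk20 Mk21)

definition pr :: "real \<Rightarrow> nat \<Rightarrow> real" where "pr t m = (\<Prod>j=6..m. 1 + t / ((1 - dd j) * real (card (S j))))"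

lemma pr_Suc: "5 \<le> m \<Longrightarrow> pr t (Suc m) = pr t m * (1 + t / ((1 - dd (Suc m)) * real (card (S (Suc m)))))"
  unfolding pr_def by (simp add: prod.cl_ivl_Suc)

lemma pr_step_up:
  assumes "pr t m \<le> U" "5 \<le> m" "0 \<le> 1 + t / ((1 - dd (Suc m)) * real (card (S (Suc m))))"
    "U * (1 + t / ((1 - dd (Suc m)) * real (card (S (Suc m))))) \<le> U'"
  shows "pr t (Suc m) \<le> U'"
  using assms mult_right_mono[OF assms(1) assms(3)] by (simp add: pr_Suc)

lemma pr_step_lo:
  assumes "L \<le> pr t m" "5 \<le> m" "0 \<le> 1 + t / ((1 - dd (Suc m)) * real (card (S (Suc m))))"
    "U' \<le> L * (1 + t / ((1 - dd (Suc m)) * real (card (S (Suc m)))))"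
  shows "U' \<le> pr t (Suc m)"
  using assms mult_right_mono[OF assms(1) assms(3)] by (simp add: pr_Suc)

lemma pr3_5: "pr 3 5 \<le> 1" by (simp add: pr_def)

lemma pr1_5: "pr 1 5 \<ge> 1" by (simp add: pr_def)

lemma pr3_6: "pr 3 6 \<le> (326781327/250000000::real)"
proof -
  have "pr 3 (Suc 5) \<le> (326781327/250000000::real)" by (rule pr_step_up[OF pr3_5]) (simp_all add: cardS6 dd6)
  then show ?thesis by simp
qed

lemma pr1_6: "pr 1 6 \<ge> (551187551/500000000::real)"
proof -
  have "pr 1 (Suc 5) \<ge> (551187551/500000000::real)" by (rule pr_step_lo[OF pr1_5]) (simp_all add: cardS6 dd6)
  then show ?thesis by simp
qed

lemma pr3_7: "pr 3 7 \<le> (201781327/125000000::real)"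
proof -
  have "pr 3 (Suc 6) \<le> (201781327/125000000::real)" by (rule pr_step_up[OF pr3_6]) (simp_all add: cardS7 dd7)
  then show ?thesis by simp
qed

lemma pr1_7: "pr 1 7 \<ge> (297178501/250000000::real)"
proof -
  have "pr 1 (Suc 6) \<ge> (297178501/250000000::real)" by (rule pr_step_lo[OF pr1_6]) (simp_all add: cardS7 dd7)
  then show ?thesis by simp
qed

lemma pr3_8: "pr 3 8 \<le> (491484801/250000000::real)"
proof -
  have "pr 3 (Suc 7) \<le> (491484801/250000000::real)" by (rule pr_step_up[OF pr3_7]) (simp_all add: cardS8 dd8)
  then show ?thesis by simp
qed

lemma pr1_8: "pr 1 8 \<ge> (255008073/200000000::real)"
proof -
  have "pr 1 (Suc 7) \<ge> (255008073/200000000::real)" by (rule pr_step_lo[OF pr1_7]) (simp_all add: cardS8 dd8)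
  then show ?thesis by simp
qed

lemma pr3_9: "pr 3 9 \<le> (463550733/200000000::real)"
proof -
  have "pr 3 (Suc 8) \<le> (463550733/200000000::real)" by (rule pr_step_up[OF pr3_8]) (simp_all add: cardS9 dd9)
  then show ?thesis by simp
qed

lemma pr1_9: "pr 1 9 \<ge> (675549303/500000000::real)"
proof -
  have "pr 1 (Suc 8) \<ge> (675549303/500000000::real)" by (rule pr_step_lo[OF pr1_8]) (simp_all add: cardS9 dd9)
  then show ?thesis by simp
qed

lemma pr3_10: "pr 3 10 \<le> (131867783/50000000::real)"
proof -
  have "pr 3 (Suc 9) \<le> (131867783/50000000::real)" by (rule pr_step_up[OF pr3_9]) (simp_all add: cardS10 dd10)
  then show ?thesis by simp
qed

lemma pr1_10: "pr 1 10 \<ge> (28264019/20000000::real)"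
proof -
  have "pr 1 (Suc 9) \<ge> (28264019/20000000::real)" by (rule pr_step_lo[OF pr1_9]) (simp_all add: cardS10 dd10)
  then show ?thesis by simp
qed

lemma pr3_11: "pr 3 11 \<le> (59696667/20000000::real)"
proof -
  have "pr 3 (Suc 10) \<le> (59696667/20000000::real)" by (rule pr_step_up[OF pr3_10]) (simp_all add: cardS11 dd11)
  then show ?thesis by simp
qed

lemma pr1_11: "pr 1 11 \<ge> (1475265111/1000000000::real)"
proof -
  have "pr 1 (Suc 10) \<ge> (1475265111/1000000000::real)" by (rule pr_step_lo[OF pr1_10]) (simp_all add: cardS11 dd11)
  then show ?thesis by simp
qed

lemma pr3_12: "pr 3 12 \<le> (1653724141/500000000::real)"
proof -
  have "pr 3 (Suc 11) \<le> (1653724141/500000000::real)" by (rule pr_step_up[OF pr3_11]) (simp_all add: cardS12 dd12)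
  then show ?thesis by simp
qed

lemma pr1_12: "pr 1 12 \<ge> (61136653/40000000::real)"
proof -
  have "pr 1 (Suc 11) \<ge> (61136653/40000000::real)" by (rule pr_step_lo[OF pr1_11]) (simp_all add: cardS12 dd12)
  then show ?thesis by simp
qed

lemma pr3_13: "pr 3 13 \<le> (726682461/200000000::real)"
proof -
  have "pr 3 (Suc 12) \<le> (726682461/200000000::real)" by (rule pr_step_up[OF pr3_12]) (simp_all add: cardS13 dd13)
  then show ?thesis by simp
qed

lemma pr1_13: "pr 1 13 \<ge> (157862711/100000000::real)"
proof -
  have "pr 1 (Suc 12) \<ge> (157862711/100000000::real)" by (rule pr_step_lo[OF pr1_12]) (simp_all add: cardS13 dd13)
  then show ?thesis by simp
qed

lemma pr3_14: "pr 3 14 \<le> (3976705229/1000000000::real)"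
proof -
  have "pr 3 (Suc 13) \<le> (3976705229/1000000000::real)" by (rule pr_step_up[OF pr3_13]) (simp_all add: cardS14 dd14)
  then show ?thesis by simp
qed

lemma pr1_14: "pr 1 14 \<ge> (1628344517/1000000000::real)"
proof -
  have "pr 1 (Suc 13) \<ge> (1628344517/1000000000::real)" by (rule pr_step_lo[OF pr1_13]) (simp_all add: cardS14 dd14)
  then show ?thesis by simp
qed

lemma pr3_15: "pr 3 15 \<le> (864043123/200000000::real)"
proof -
  have "pr 3 (Suc 14) \<le> (864043123/200000000::real)" by (rule pr_step_up[OF pr3_14]) (simp_all add: cardS15 dd15)
  then show ?thesis by simp
qed

lemma pr1_15: "pr 1 15 \<ge> (13087737/7812500::real)"
proof -
  have "pr 1 (Suc 14) \<ge> (13087737/7812500::real)" by (rule pr_step_lo[OF pr1_14]) (simp_all add: cardS15 dd15)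
  then show ?thesis by simp
qed

lemma pr3_16: "pr 3 16 \<le> (4650339071/1000000000::real)"
proof -
  have "pr 3 (Suc 15) \<le> (4650339071/1000000000::real)" by (rule pr_step_up[OF pr3_15]) (simp_all add: cardS16 dd16)
  then show ?thesis by simp
qed

lemma pr1_16: "pr 1 16 \<ge> (429475123/250000000::real)"
proof -
  have "pr 1 (Suc 15) \<ge> (429475123/250000000::real)" by (rule pr_step_lo[OF pr1_15]) (simp_all add: cardS16 dd16)
  then show ?thesis by simp
qed

lemma pr3_17: "pr 3 17 \<le> (993870143/200000000::real)"
proof -
  have "pr 3 (Suc 16) \<le> (993870143/200000000::real)" by (rule pr_step_up[OF pr3_16]) (simp_all add: cardS17 dd17)
  then show ?thesis by simp
qed

lemma pr1_17: "pr 1 17 \<ge> (35143659/20000000::real)"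
proof -
  have "pr 1 (Suc 16) \<ge> (35143659/20000000::real)" by (rule pr_step_lo[OF pr1_16]) (simp_all add: cardS17 dd17)
  then show ?thesis by simp
qed

lemma pr3_18: "pr 3 18 \<le> (5302417117/1000000000::real)"
proof -
  have "pr 3 (Suc 17) \<le> (5302417117/1000000000::real)" by (rule pr_step_up[OF pr3_17]) (simp_all add: cardS18 dd18)
  then show ?thesis by simp
qed

lemma pr1_18: "pr 1 18 \<ge> (359288167/200000000::real)"
proof -
  have "pr 1 (Suc 17) \<ge> (359288167/200000000::real)" by (rule pr_step_lo[OF pr1_17]) (simp_all add: cardS18 dd18)
  then show ?thesis by simp
qed

lemma pr3_19: "pr 3 19 \<le> (5625498833/1000000000::real)"
proof -
  have "pr 3 (Suc 18) \<le> (5625498833/1000000000::real)" by (rule pr_step_up[OF pr3_18]) (simp_all add: cardS19 dd19)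
  then show ?thesis by simp
qed

lemma pr1_19: "pr 1 19 \<ge> (916463581/500000000::real)"
proof -
  have "pr 1 (Suc 18) \<ge> (916463581/500000000::real)" by (rule pr_step_lo[OF pr1_18]) (simp_all add: cardS19 dd19)
  then show ?thesis by simp
qed

lemma pr3_20: "pr 3 20 \<le> (297433977/50000000::real)"
proof -
  have "pr 3 (Suc 19) \<le> (297433977/50000000::real)" by (rule pr_step_up[OF pr3_19]) (simp_all add: cardS20 dd20)
  then show ?thesis by simp
qed

lemma pr1_20: "pr 1 20 \<ge> (93401363/50000000::real)"
proof -
  have "pr 1 (Suc 19) \<ge> (93401363/50000000::real)" by (rule pr_step_lo[OF pr1_19]) (simp_all add: cardS20 dd20)
  then show ?thesis by simp
qed

lemma pr3_21: "pr 3 21 \<le> (3142040479/500000000::real)"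
proof -
  have "pr 3 (Suc 20) \<le> (3142040479/500000000::real)" by (rule pr_step_up[OF pr3_20]) (simp_all add: cardS21 dd21)
  then show ?thesis by simp
qed

lemma pr1_21: "pr 1 21 \<ge> (951567637/500000000::real)"
proof -
  have "pr 1 (Suc 20) \<ge> (951567637/500000000::real)" by (rule pr_step_lo[OF pr1_20]) (simp_all add: cardS21 dd21)
  then show ?thesis by simp
qed

lemma ck_pr: "ck P5 dd m t = c5 P5 t * pr t m" by (simp add: ck_def pr_def)

lemma term_bound:
  fixes X Y c u l p3 p1 :: real
  assumes "0 \<le> X" "0 \<le> Y" "0 \<le> c" "p3 \<le> u" "l \<le> p1"
  shows "c * (X * p3 - 2 * (Y * p1) + 1) \<le> c * (X * u - 2 * (Y * l) + 1)"
proof -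
  have "X * p3 \<le> X * u" using assms by (intro mult_left_mono) auto
  moreover have "Y * l \<le> Y * p1" using assms by (intro mult_left_mono) auto
  ultimately show ?thesis using assms by (intro mult_left_mono) auto
qed

lemma tb6: assumes "0 \<le> X" "0 \<le> Y" shows "MM 6 / (real (card (S 6)))^2 * (X * pr 3 5 - 2 * (Y * pr 1 5) + 1) \<le> (408059/36000000::real) * (X * (1::real) - 2 * (Y * (1::real)) + 1)"
proof -
  have cc: "MM 6 / (real (card (S 6)))^2 = (408059/36000000::real)" by (simp add: MM6 cardS6)
  show ?thesis unfolding cc by (rule term_bound[OF assms _ pr3_5 pr1_5]) simp
qed

lemma tb7: assumes "0 \<le> X" "0 \<le> Y" shows "MM 7 / (real (card (S 7)))^2 * (X * pr 3 6 - 2 * (Y * pr 1 6) + 1) \<le> (770907/128000000::real) * (X * (326781327/250000000::real) - 2 * (Y * (551187551/500000000::real)) + 1)"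
proof -
  have cc: "MM 7 / (real (card (S 7)))^2 = (770907/128000000::real)" by (simp add: MM7 cardS7)
  show ?thesis unfolding cc by (rule term_bound[OF assms _ pr3_6 pr1_6]) simp
qed

lemma tb8: assumes "0 \<le> X" "0 \<le> Y" shows "MM 8 / (real (card (S 8)))^2 * (X * pr 3 7 - 2 * (Y * pr 1 7) + 1) \<le> (46201/10800000::real) * (X * (201781327/125000000::real) - 2 * (Y * (297178501/250000000::real)) + 1)"
proof -
  have cc: "MM 8 / (real (card (S 8)))^2 = (46201/10800000::real)" by (simp add: MM8 cardS8)
  show ?thesis unfolding cc by (rule term_bound[OF assms _ pr3_7 pr1_7]) simp
qed

lemma tb9: assumes "0 \<le> X" "0 \<le> Y" shows "MM 9 / (real (card (S 9)))^2 * (X * pr 3 8 - 2 * (Y * pr 1 8) + 1) \<le> (687717/242000000::real) * (X * (491484801/250000000::real) - 2 * (Y * (255008073/200000000::real)) + 1)"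
proof -
  have cc: "MM 9 / (real (card (S 9)))^2 = (687717/242000000::real)" by (simp add: MM9 cardS9)
  show ?thesis unfolding cc by (rule term_bound[OF assms _ pr3_8 pr1_8]) simp
qed

lemma tb10: assumes "0 \<le> X" "0 \<le> Y" shows "MM 10 / (real (card (S 10)))^2 * (X * pr 3 9 - 2 * (Y * pr 1 9) + 1) \<le> (1440589/784000000::real) * (X * (463550733/200000000::real) - 2 * (Y * (675549303/500000000::real)) + 1)"
proof -
  have cc: "MM 10 / (real (card (S 10)))^2 = (1440589/784000000::real)" by (simp add: MM10 cardS10)
  show ?thesis unfolding cc by (rule term_bound[OF assms _ pr3_9 pr1_9]) simp
qed

lemma tb11: assumes "0 \<le> X" "0 \<le> Y" shows "MM 11 / (real (card (S 11)))^2 * (X * pr 3 10 - 2 * (Y * pr 1 10) + 1) \<le> (5461/3600000::real) * (X * (131867783/50000000::real) - 2 * (Y * (28264019/20000000::real)) + 1)"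
proof -
  have cc: "MM 11 / (real (card (S 11)))^2 = (5461/3600000::real)" by (simp add: MM11 cardS11)
  show ?thesis unfolding cc by (rule term_bound[OF assms _ pr3_10 pr1_10]) simp
qed

lemma tb12: assumes "0 \<le> X" "0 \<le> Y" shows "MM 12 / (real (card (S 12)))^2 * (X * pr 3 11 - 2 * (Y * pr 1 11) + 1) \<le> (1414673/1296000000::real) * (X * (59696667/20000000::real) - 2 * (Y * (1475265111/1000000000::real)) + 1)"
proof -
  have cc: "MM 12 / (real (card (S 12)))^2 = (1414673/1296000000::real)" by (simp add: MM12 cardS12)
  show ?thesis unfolding cc by (rule term_bound[OF assms _ pr3_11 pr1_11]) simp
qed

lemma tb13: assumes "0 \<le> X" "0 \<le> Y" shows "MM 13 / (real (card (S 13)))^2 * (X * pr 3 12 - 2 * (Y * pr 1 12) + 1) \<le> (687243/800000000::real) * (X * (1653724141/500000000::real) - 2 * (Y * (61136653/40000000::real)) + 1)"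
proof -
  have cc: "MM 13 / (real (card (S 13)))^2 = (687243/800000000::real)" by (simp add: MM13 cardS13)
  show ?thesis unfolding cc by (rule term_bound[OF assms _ pr3_12 pr1_12]) simp
qed

lemma tb14: assumes "0 \<le> X" "0 \<le> Y" shows "MM 14 / (real (card (S 14)))^2 * (X * pr 3 13 - 2 * (Y * pr 1 13) + 1) \<le> (677249/882000000::real) * (X * (726682461/200000000::real) - 2 * (Y * (157862711/100000000::real)) + 1)"
proof -
  have cc: "MM 14 / (real (card (S 14)))^2 = (677249/882000000::real)" by (simp add: MM14 cardS14)
  show ?thesis unfolding cc by (rule term_bound[OF assms _ pr3_13 pr1_13]) simp
qed

lemma tb15: assumes "0 \<le> X" "0 \<le> Y" shows "MM 15 / (real (card (S 15)))^2 * (X * pr 3 14 - 2 * (Y * pr 1 14) + 1) \<le> (675497/1058000000::real) * (X * (3976705229/1000000000::real) - 2 * (Y * (1628344517/1000000000::real)) + 1)"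
proof -
  have cc: "MM 15 / (real (card (S 15)))^2 = (675497/1058000000::real)" by (simp add: MM15 cardS15)
  show ?thesis unfolding cc by (rule term_bound[OF assms _ pr3_14 pr1_14]) simp
qed

lemma tb16: assumes "0 \<le> X" "0 \<le> Y" shows "MM 16 / (real (card (S 16)))^2 * (X * pr 3 15 - 2 * (Y * pr 1 15) + 1) \<le> (337759/676000000::real) * (X * (864043123/200000000::real) - 2 * (Y * (13087737/7812500::real)) + 1)"
proof -
  have cc: "MM 16 / (real (card (S 16)))^2 = (337759/676000000::real)" by (simp add: MM16 cardS16)
  show ?thesis unfolding cc by (rule term_bound[OF assms _ pr3_15 pr1_15]) simp
qed

lemma tb17: assumes "0 \<le> X" "0 \<le> Y" shows "MM 17 / (real (card (S 17)))^2 * (X * pr 3 16 - 2 * (Y * pr 1 16) + 1) \<le> (1347481/3364000000::real) * (X * (4650339071/1000000000::real) - 2 * (Y * (429475123/250000000::real)) + 1)"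
proof -
  have cc: "MM 17 / (real (card (S 17)))^2 = (1347481/3364000000::real)" by (simp add: MM17 cardS17)
  show ?thesis unfolding cc by (rule term_bound[OF assms _ pr3_16 pr1_16]) simp
qed

lemma tb18: assumes "0 \<le> X" "0 \<le> Y" shows "MM 18 / (real (card (S 18)))^2 * (X * pr 3 17 - 2 * (Y * pr 1 17) + 1) \<le> (263807/720000000::real) * (X * (993870143/200000000::real) - 2 * (Y * (35143659/20000000::real)) + 1)"
proof -
  have cc: "MM 18 / (real (card (S 18)))^2 = (263807/720000000::real)" by (simp add: MM18 cardS18)
  show ?thesis unfolding cc by (rule term_bound[OF assms _ pr3_17 pr1_17]) simp
qed

lemma tb19: assumes "0 \<le> X" "0 \<le> Y" shows "MM 19 / (real (card (S 19)))^2 * (X * pr 3 18 - 2 * (Y * pr 1 18) + 1) \<le> (1319119/4356000000::real) * (X * (5302417117/1000000000::real) - 2 * (Y * (359288167/200000000::real)) + 1)"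
proof -
  have cc: "MM 19 / (real (card (S 19)))^2 = (1319119/4356000000::real)" by (simp add: MM19 cardS19)
  show ?thesis unfolding cc by (rule term_bound[OF assms _ pr3_18 pr1_18]) simp
qed

lemma tb20: assumes "0 \<le> X" "0 \<le> Y" shows "MM 20 / (real (card (S 20)))^2 * (X * pr 3 19 - 2 * (Y * pr 1 19) + 1) \<le> (164897/612500000::real) * (X * (5625498833/1000000000::real) - 2 * (Y * (916463581/500000000::real)) + 1)"
proof -
  have cc: "MM 20 / (real (card (S 20)))^2 = (164897/612500000::real)" by (simp add: MM20 cardS20)
  show ?thesis unfolding cc by (rule term_bound[OF assms _ pr3_19 pr1_19]) simp
qed

lemma tb21: assumes "0 \<le> X" "0 \<le> Y" shows "MM 21 / (real (card (S 21)))^2 * (X * pr 3 20 - 2 * (Y * pr 1 20) + 1) \<le> (259199/1036800000::real) * (X * (297433977/50000000::real) - 2 * (Y * (93401363/50000000::real)) + 1)"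
proof -
  have cc: "MM 21 / (real (card (S 21)))^2 = (259199/1036800000::real)" by (simp add: MM21 cardS21)
  show ?thesis unfolding cc by (rule term_bound[OF assms _ pr3_20 pr1_20]) simp
qed

lemma sum_bound:
  fixes X Y :: real
  assumes X0: "0 \<le> X" and Y0: "0 \<le> Y"
  shows "(\<Sum>k=6..21. MM k / (real (card (S k)))^2 * (X * pr 3 (k-1) - 2 * (Y * pr 1 (k-1)) + 1))
     \<le> (198473144418331896082970603737/3209610404800800000000000000000::real) * X - (6153942424526357546827041611/76621999053600000000000000000::real) * Y + (23303439653740220081/700278633774720000000::real)"
proof -
  have e: "(\<Sum>k=6..21. MM k / (real (card (S k)))^2 * (X * pr 3 (k-1) - 2 * (Y * pr 1 (k-1)) + 1))
     = MM 6 / (real (card (S 6)))^2 * (X * pr 3 5 - 2 * (Y * pr 1 5) + 1) + MM 7 / (real (card (S 7)))^2 * (X * pr 3 6 - 2 * (Y * pr 1 6) + 1) + MM 8 / (real (card (S 8)))^2 * (X * pr 3 7 - 2 * (Y * pr 1 7) + 1) + MM 9 / (real (card (S 9)))^2 * (X * pr 3 8 - 2 * (Y * pr 1 8) + 1) + MM 10 / (real (card (S 10)))^2 * (X * pr 3 9 - 2 * (Y * pr 1 9) + 1) + MM 11 / (real (card (S 11)))^2 * (X * pr 3 10 - 2 * (Y * pr 1 10) + 1) + MM 12 / (real (card (S 12)))^2 * (X * pr 3 11 - 2 * (Y * pr 1 11) + 1) + MM 13 / (real (card (S 13)))^2 * (X * pr 3 12 - 2 * (Y * pr 1 12) + 1)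 + MM 14 / (real (card (S 14)))^2 * (X * pr 3 13 - 2 * (Y * pr 1 13) + 1) + MM 15 / (real (card (S 15)))^2 * (X * pr 3 14 - 2 * (Y * pr 1 14) + 1) + MM 16 / (real (card (S 16)))^2 * (X * pr 3 15 - 2 * (Y * pr 1 15) + 1) + MM 17 / (real (card (S 17)))^2 * (X * pr 3 16 - 2 * (Y * pr 1 16) + 1) + MM 18 / (real (card (S 18)))^2 * (X * pr 3 17 - 2 * (Y * pr 1 17) + 1) + MM 19 / (real (card (S 19)))^2 * (X * pr 3 18 - 2 * (Y * pr 1 18) + 1) + MM 20 / (real (card (S 20)))^2 * (X * pr 3 19 - 2 * (Y * pr 1 19) + 1) + MM 21 / (real (card (S 21)))^2 * (X * pr 3 20 - 2 * (Y * pr 1 20) + 1)"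
    unfolding e621 by (simp add: atLeastLessThan_nat_numeral)
  have h: "MM 6 / (real (card (S 6)))^2 * (X * pr 3 5 - 2 * (Y * pr 1 5) + 1) + MM 7 / (real (card (S 7)))^2 * (X * pr 3 6 - 2 * (Y * pr 1 6) + 1) + MM 8 / (real (card (S 8)))^2 * (X * pr 3 7 - 2 * (Y * pr 1 7) + 1) + MM 9 / (real (card (S 9)))^2 * (X * pr 3 8 - 2 * (Y * pr 1 8) + 1) + MM 10 / (real (card (S 10)))^2 * (X * pr 3 9 - 2 * (Y * pr 1 9) + 1) + MM 11 / (real (card (S 11)))^2 * (X * pr 3 10 - 2 * (Y * pr 1 10) + 1) + MM 12 / (real (card (S 12)))^2 * (X * pr 3 11 - 2 * (Y * pr 1 11) + 1) + MM 13 / (real (card (S 13)))^2 * (X * pr 3 12 - 2 * (Y * pr 1 12) + 1) + MM 14 / (real (card (S 14)))^2 * (X * pr 3 13 - 2 * (Y * pr 1 13) + 1) + MM 15 / (real (card (S 15)))^2 * (X * pr 3 14 - 2 * (Y * pr 1 14) + 1) + MM 16 / (real (card (S 16)))^2 * (X * pr 3 15 - 2 * (Y * pr 1 15) + 1) + MM 17 / (real (card (S 17)))^2 * (X * pr 3 16 - 2 * (Y * pr 1 16) + 1) + MM 18 / (real (card (S 18)))^2 * (X * pr 3 17 - 2 * (Y * pr 1 17) + 1) + MM 19 / (real (card (S 19)))^2 * (X * pr 3 18 - 2 * (Y * pr 1 18) + 1) + MM 20 / (real (card (S 20)))^2 * (X * pr 3 19 - 2 * (Y * pr 1 19) + 1)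 + MM 21 / (real (card (S 21)))^2 * (X * pr 3 20 - 2 * (Y * pr 1 20) + 1) \<le> (408059/36000000::real) * (X * (1::real) - 2 * (Y * (1::real)) + 1) + (770907/128000000::real) * (X * (326781327/250000000::real) - 2 * (Y * (551187551/500000000::real)) + 1) + (46201/10800000::real) * (X * (201781327/125000000::real) - 2 * (Y * (297178501/250000000::real)) + 1) + (687717/242000000::real) * (X * (491484801/250000000::real) - 2 * (Y * (255008073/200000000::real)) + 1) + (1440589/784000000::real) * (X * (463550733/200000000::real) - 2 * (Y * (675549303/500000000::real)) + 1) + (5461/3600000::real) * (X * (131867783/50000000::real) - 2 * (Y * (28264019/20000000::real)) + 1) + (1414673/1296000000::real) * (X * (59696667/20000000::real) - 2 * (Y * (1475265111/1000000000::real)) + 1) + (687243/800000000::real) * (X * (1653724141/500000000::real) - 2 * (Y * (61136653/40000000::real)) + 1) + (677249/882000000::real) * (X * (726682461/200000000::real) - 2 * (Y * (157862711/100000000::real)) + 1) + (675497/1058000000::real) * (X * (3976705229/1000000000::real) - 2 * (Y * (1628344517/1000000000::real)) + 1) + (337759/676000000::real) * (X * (864043123/200000000::real) - 2 * (Y * (13087737/7812500::real)) + 1) + (1347481/3364000000::real) * (X * (4650339071/1000000000::real) - 2 * (Y * (429475123/250000000::real)) + 1) + (263807/720000000::real) * (X * (993870143/200000000::real) - 2 * (Y * (35143659/20000000::real)) + 1) + (1319119/4356000000::real) * (X * (5302417117/1000000000::real) - 2 * (Y * (359288167/200000000::real)) + 1) + (164897/612500000::real) * (X * (5625498833/1000000000::real)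 - 2 * (Y * (916463581/500000000::real)) + 1) + (259199/1036800000::real) * (X * (297433977/50000000::real) - 2 * (Y * (93401363/50000000::real)) + 1)"
    by (intro add_mono) (rule tb6[OF X0 Y0] tb7[OF X0 Y0] tb8[OF X0 Y0] tb9[OF X0 Y0] tb10[OF X0 Y0] tb11[OF X0 Y0] tb12[OF X0 Y0] tb13[OF X0 Y0] tb14[OF X0 Y0] tb15[OF X0 Y0] tb16[OF X0 Y0] tb17[OF X0 Y0] tb18[OF X0 Y0] tb19[OF X0 Y0] tb20[OF X0 Y0] tb21[OF X0 Y0])+
  have r: "(408059/36000000::real) * (X * (1::real) - 2 * (Y * (1::real)) + 1) + (770907/128000000::real) * (X * (326781327/250000000::real) - 2 * (Y * (551187551/500000000::real)) + 1) + (46201/10800000::real) * (X * (201781327/125000000::real) - 2 * (Y * (297178501/250000000::real)) + 1) + (687717/242000000::real) * (X * (491484801/250000000::real) - 2 * (Y * (255008073/200000000::real)) + 1) + (1440589/784000000::real) * (X * (463550733/200000000::real) - 2 * (Y * (675549303/500000000::real)) + 1) + (5461/3600000::real) * (X * (131867783/50000000::real) - 2 * (Y * (28264019/20000000::real)) + 1) + (1414673/1296000000::real) * (X * (59696667/20000000::real) - 2 * (Y * (1475265111/1000000000::real)) + 1) + (687243/800000000::real) * (X * (1653724141/500000000::real) - 2 * (Y * (61136653/40000000::real)) + 1) + (677249/882000000::real) * (X * (726682461/200000000::real) - 2 * (Y * (157862711/100000000::real)) + 1) + (675497/1058000000::real) * (X * (3976705229/1000000000::real) - 2 * (Y * (1628344517/1000000000::real))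 + 1) + (337759/676000000::real) * (X * (864043123/200000000::real) - 2 * (Y * (13087737/7812500::real)) + 1) + (1347481/3364000000::real) * (X * (4650339071/1000000000::real) - 2 * (Y * (429475123/250000000::real)) + 1) + (263807/720000000::real) * (X * (993870143/200000000::real) - 2 * (Y * (35143659/20000000::real)) + 1) + (1319119/4356000000::real) * (X * (5302417117/1000000000::real) - 2 * (Y * (359288167/200000000::real)) + 1) + (164897/612500000::real) * (X * (5625498833/1000000000::real) - 2 * (Y * (916463581/500000000::real)) + 1) + (259199/1036800000::real) * (X * (297433977/50000000::real) - 2 * (Y * (93401363/50000000::real)) + 1) = (198473144418331896082970603737/3209610404800800000000000000000::real) * X - (6153942424526357546827041611/76621999053600000000000000000::real) * Y + (23303439653740220081/700278633774720000000::real)" by (simp add: field_simps)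
  show ?thesis unfolding e using h r by linarith
qed


theorem lemma5p3:
  fixes n :: nat and \<F> :: "nat set set" and a :: "nat set \<Rightarrow> nat \<Rightarrow> nat"
    and P5 :: "(nat \<Rightarrow> nat) \<Rightarrow> real"
  assumes "n \<ge> 21"
    and "valid_collection n \<F> a"
    and "prob_on_R5 \<F> a P5"
    and "c5 P5 3 - 3/4 * c5 P5 1 \<le> 9.019"
  shows "\<exists>\<delta> :: nat \<Rightarrow> real. (\<forall>j\<in>{6..21}. 0 < \<delta> j \<and> \<delta> j \<le> 1/2) \<and>
           mu \<F> a P5 \<delta> 21 > 0 \<and>
           ck P5 \<delta> 21 3 / mu \<F> a P5 \<delta> 21 < 138.874"
proof -
  have vc: "\<And>F i. F \<in> \<F> \<Longrightarrow> F = {i} \<Longrightarrow> i \<ge> 22"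
    using assms(2) unfolding valid_collection_def by blast
  have nn: "\<And>x. x \<in> Qset 5 \<Longrightarrow> P5 x \<ge> 0" and sm: "(\<Sum>x\<in>Qset 5. P5 x) = 1"
    using assms(3) unfolding prob_on_R5_def by auto
  interpret covs \<F> a P5 dd
    using nn dd_range sm vc by unfold_locales auto
  define X where "X = c5 P5 3"
  define Y where "Y = c5 P5 1"
  have xy: "X \<ge> 3 * Y - 2" "X \<le> 81 * Y - 80" "Y \<ge> 1" "X \<ge> 1"
    using XY_facts unfolding X_def Y_def by auto
  have hy: "X - 3/4 * Y \<le> 9019/1000" using assms(4) unfolding X_def Y_def by simp
  have mb: "mu \<F> a P5 dd 21 \<ge> 1 - (\<Sum>k=6..21. MM k / (real (card (S k)))^2 *
           (ck P5 dd (k-1) 3 - 2 * ck P5 dd (k-1) 1 + 1))"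
    apply (rule mu_bound)
    apply (erule MM_nn)
    apply (erule M_all)
    done
  have eqs: "(\<Sum>k=6..21. MM k / (real (card (S k)))^2 * (ck P5 dd (k-1) 3 - 2 * ck P5 dd (k-1) 1 + 1))
     = (\<Sum>k=6..21. MM k / (real (card (S k)))^2 * (X * pr 3 (k-1) - 2 * (Y * pr 1 (k-1)) + 1))"
    by (simp add: ck_pr X_def Y_def)
  have sb: "(\<Sum>k=6..21. MM k / (real (card (S k)))^2 * (X * pr 3 (k-1) - 2 * (Y * pr 1 (k-1)) + 1))
     \<le> (198473144418331896082970603737/3209610404800800000000000000000::real) * X - (6153942424526357546827041611/76621999053600000000000000000::real) * Y + (23303439653740220081/700278633774720000000::real)"
    by (rule sum_bound) (use xy in auto)
  define L where "L = 1 - ((198473144418331896082970603737/3209610404800800000000000000000::real) * X - (6153942424526357546827041611/76621999053600000000000000000::real) * Y + (23303439653740220081/700278633774720000000::real))"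
  have muL: "mu \<F> a P5 dd 21 \<ge> L" using mb eqs sb unfolding L_def by linarith
  have ck21: "ck P5 dd 21 3 \<le> X * (3142040479/500000000::real)"
    unfolding ck_pr X_def[symmetric] using xy pr3_21 by (intro mult_left_mono) auto
  have lin: "X * (3142040479/500000000::real) - (138874/1000) * L = (1037656762725191365212888252682003/69774139234800000000000000000000::real) * X + (-18578752179645073433870838623609/1665695631600000000000000000000::real) * Y + (-2043788111051237955575461/15223448560320000000000::real)"
    unfolding L_def by (simp add: field_simps)
  have "(1037656762725191365212888252682003/69774139234800000000000000000000::real) * X + (-18578752179645073433870838623609/1665695631600000000000000000000::real) * Y + (-2043788111051237955575461/15223448560320000000000::real) < 0" using xy hy by linarith
  then have main: "X * (3142040479/500000000::real) < (138874/1000) * L" using lin by linarith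
  have Xp: "0 < X * (3142040479/500000000::real)" using xy by simp
  have mu0: "mu \<F> a P5 dd 21 > 0" using main Xp muL by linarith
  have "ck P5 dd 21 3 < (138874/1000) * mu \<F> a P5 dd 21" using ck21 main muL by linarith
  then have "ck P5 dd 21 3 / mu \<F> a P5 dd 21 < 138874/1000" using mu0 by (simp add: divide_less_eq)
  then have "ck P5 dd 21 3 / mu \<F> a P5 dd 21 < 138.874" by simp
  then show ?thesis using dd_range mu0 by blast
qed

end
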